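(* In the setting of the context, define $c\colon G_F\to\mathbb{T}$ by $c(\alpha)=\varphi(n)(\Phi(\alpha))/n(\alpha)$, where $U\in\mathrm{Bis}(G)$ and $n\in C_0(U)$ are any choices with $\alpha\in U$ and $n(\alpha)\neq0$ (this value lies in $\mathbb{T}$ and is independent of choices). Then $c$ is a continuous groupoid homomorphism.
   Context: $G$ is an étale groupoid, $H$ an effective étale groupoid (étale groupoids are locally compact Hausdorff with $d$ a local homeomorphism; effective means the interior of the isotropy equals the unit space), $\varphi\colon C^*_r(G)\to C^*_r(H)$ a *-homomorphism of reduced groupoid C*-algebras with $\varphi(C_0(G^{(0)}))\subset C_0(H^{(0)})$ an ideal of $C_0(H^{(0)})$. Elements of $C^*_r$ are regarded as functions on the groupoid via the standard evaluation map. $\mathrm{Bis}(G)$ is the set of open bisections and $C_0(U)$ the closure of $C_c(U)$ in $C^*_r(G)$. $F\subset G^{(0)}$ is the closed invariant set with $\ker\varphi\cap C_0(G^{(0)})=C_0(G^{(0)}\setminus F)$, $G_F=d^{-1}(F)$. $\psi\colon\mathrm{Bis}(G)\to\mathrm{Bis}(H)$ is the semigroup homomorphism with $\varphi(C_0(U))=C_0(\psi(U))$. $\sigma\colon F\to H^{(0)}$ is the homeomorphism onto the open set $V$ with $\varphi(C_0(G^{(0)}))=C_0(V)$ determined by $\varphi(f)(\sigma(x))=f(x)$ for $f\in C_0(G^{(0)})$, $x\in F$. $\Phi\colon G_F\to H$ is the groupoid homomorphism given by: for $\alpha\in G_F$ and any $U\in\mathrm{Bis}(G)$ with $\alpha\in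 U$, $\Phi(\alpha)$ is the unique $\delta\in\psi(U)$ with $d(\delta)=\sigma(d(\alpha))$ (this exists and is independent of $U$). *)

theory Defs
  imports "HOL-Analysis.Analysis"
begin

text \<open>A topological groupoid whose set of arrows is the whole (Hausdorff) type.
  Composition gmul a b is meant for composable pairs (gsrc a = grng b).\<close>
record 'g groupoid =
  gsrc :: "'g \<Rightarrow> 'g"
  grng :: "'g \<Rightarrow> 'g"
  gmul :: "'g \<Rightarrow> 'g \<Rightarrow> 'g"
  ginv :: "'g \<Rightarrow> 'g"

definition units :: "'g groupoid \<Rightarrow> 'g set" where
  "units G = range (gsrc G)"

definition is_groupoid :: "'g groupoid \<Rightarrow> bool" where
  "is_groupoid G \<longleftrightarrow>
     range (grng G) \<subseteq> units G \<and>
     (\<forall>u\<in>units G. gsrc G u = u \<and> grng G u = u) \<and>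
     (\<forall>a b. gsrc G a = grng G b \<longrightarrow>
        gsrc G (gmul G a b) = gsrc G b \<and> grng G (gmul G a b) = grng G a) \<and>
     (\<forall>a b c. gsrc G a = grng G b \<and> gsrc G b = grng G c \<longrightarrow>
        gmul G (gmul G a b) c = gmul G a (gmul G b c)) \<and>
     (\<forall>a. gmul G (grng G a) a = a \<and> gmul G a (gsrc G a) = a) \<and>
     (\<forall>a. gsrc G (ginv G a) = grng G a \<and> grng G (ginv G a) = gsrc G a \<and>
          gmul G a (ginv G a) = grng G a \<and> gmul G (ginv G a) a = gsrc G a)"

definition etale_groupoid :: "('g::t2_space) groupoid \<Rightarrow> bool" where
  "etale_groupoid G \<longleftrightarrow>
     is_groupoid G \<and>
     locally compact (UNIV :: 'g set) \<and>
     continuous_on {(a, b). gsrc G a = grng G b} (\<lambda>(a, b). gmul G a b) \<and>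
     continuous_on UNIV (ginv G) \<and>
     (\<forall>\<gamma>. \<exists>U. open U \<and> \<gamma> \<in> U \<and> open (gsrc G ` U) \<and>
          (\<exists>g. homeomorphism U (gsrc G ` U) (gsrc G) g))"

definition effective :: "('g::topological_space) groupoid \<Rightarrow> bool" where
  "effective G \<longleftrightarrow> interior {a. gsrc G a = grng G a} = units G"

definition open_bisections :: "('g::topological_space) groupoid \<Rightarrow> 'g set set" where
  "open_bisections G = {U. open U \<and> inj_on (gsrc G) U \<and> inj_on (grng G) U}"

definition bis_prod :: "'g groupoid \<Rightarrow> 'g set \<Rightarrow> 'g set \<Rightarrow> 'g set" where
  "bis_prod G U V = {gmul G a b | a b. a \<in> U \<and> b \<in> V \<and> gsrc G a = grng G b}"

definition Cc_on :: "('g::topological_space) set \<Rightarrow> ('g \<Rightarrow> complex) set" where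
  "Cc_on U = {f. continuous_on UNIV f \<and> compact (closure {x. f x \<noteq> 0}) \<and>
                 closure {x. f x \<noteq> 0} \<subseteq> U}"

definition fiber :: "'g groupoid \<Rightarrow> 'g \<Rightarrow> 'g set" where
  "fiber G x = {\<alpha>. gsrc G \<alpha> = x}"

definition l2 :: "'a set \<Rightarrow> ('a \<Rightarrow> complex) \<Rightarrow> bool" where
  "l2 X \<xi> \<longleftrightarrow> (\<lambda>\<alpha>. (cmod (\<xi> \<alpha>))\<^sup>2) summable_on X"

definition l2norm :: "'a set \<Rightarrow> ('a \<Rightarrow> complex) \<Rightarrow> real" where
  "l2norm X \<xi> = sqrt (\<Sum>\<^sub>\<infinity>\<alpha>\<in>X. (cmod (\<xi> \<alpha>))\<^sup>2)"

definition regrep :: "'g groupoid \<Rightarrow> ('g \<Rightarrow> complex) \<Rightarrow> 'g \<Rightarrow> ('g \<Rightarrow> complex) \<Rightarrow> 'g \<Rightarrow> complex" where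
  "regrep G f x \<xi> = (\<lambda>\<gamma>. \<Sum>\<^sub>\<infinity>\<alpha>\<in>fiber G x. f (gmul G \<gamma> (ginv G \<alpha>)) * \<xi> \<alpha>)"

definition opnorm_at :: "'g groupoid \<Rightarrow> ('g \<Rightarrow> complex) \<Rightarrow> 'g \<Rightarrow> real" where
  "opnorm_at G f x = Sup {l2norm (fiber G x) (regrep G f x \<xi>) | \<xi>.
                           l2 (fiber G x) \<xi> \<and> l2norm (fiber G x) \<xi> \<le> 1}"

definition rnorm :: "'g groupoid \<Rightarrow> ('g \<Rightarrow> complex) \<Rightarrow> real" where
  "rnorm G f = Sup (opnorm_at G f ` units G)"

definition rcauchy :: "'g groupoid \<Rightarrow> (nat \<Rightarrow> 'g \<Rightarrow> complex) \<Rightarrow> bool" where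
  "rcauchy G f \<longleftrightarrow> (\<forall>e>0. \<exists>N. \<forall>m\<ge>N. \<forall>n\<ge>N. rnorm G (\<lambda>\<gamma>. f m \<gamma> - f n \<gamma>) < e)"

text \<open>Closure of C_c(U) in C*_r(G), viewed as functions on G via the (injective)
  evaluation map j: an element is the pointwise limit of a reduced-norm Cauchy
  sequence from C_c(U).\<close>
definition C0_on :: "('g::topological_space) groupoid \<Rightarrow> 'g set \<Rightarrow> ('g \<Rightarrow> complex) set" where
  "C0_on G U = {a. \<exists>f. (\<forall>n. f n \<in> Cc_on U) \<and> rcauchy G f \<and>
                       (\<forall>\<gamma>. (\<lambda>n. f n \<gamma>) \<longlonglongrightarrow> a \<gamma>)}"

definition Cr :: "('g::topological_space) groupoid \<Rightarrow> ('g \<Rightarrow> complex) set" where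
  "Cr G = C0_on G UNIV"

definition conv :: "'g groupoid \<Rightarrow> ('g \<Rightarrow> complex) \<Rightarrow> ('g \<Rightarrow> complex) \<Rightarrow> 'g \<Rightarrow> complex" where
  "conv G a b = (\<lambda>\<gamma>. \<Sum>\<^sub>\<infinity>\<beta>\<in>fiber G (gsrc G \<gamma>). a (gmul G \<gamma> (ginv G \<beta>)) * b \<beta>)"

definition invol :: "'g groupoid \<Rightarrow> ('g \<Rightarrow> complex) \<Rightarrow> 'g \<Rightarrow> complex" where
  "invol G a = (\<lambda>\<gamma>. cnj (a (ginv G \<gamma>)))"

definition star_hom :: "('g::topological_space) groupoid \<Rightarrow> ('h::topological_space) groupoid \<Rightarrow>
     (('g \<Rightarrow> complex) \<Rightarrow> ('h \<Rightarrow> complex)) \<Rightarrow> bool" where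
  "star_hom G H \<phi> \<longleftrightarrow>
     (\<forall>a\<in>Cr G. \<phi> a \<in> Cr H) \<and>
     (\<forall>a\<in>Cr G. \<forall>b\<in>Cr G. \<phi> (\<lambda>\<gamma>. a \<gamma> + b \<gamma>) = (\<lambda>\<eta>. \<phi> a \<eta> + \<phi> b \<eta>)) \<and>
     (\<forall>a\<in>Cr G. \<forall>z. \<phi> (\<lambda>\<gamma>. z * a \<gamma>) = (\<lambda>\<eta>. z * \<phi> a \<eta>)) \<and>
     (\<forall>a\<in>Cr G. \<forall>b\<in>Cr G. \<phi> (conv G a b) = conv H (\<phi> a) (\<phi> b)) \<and>
     (\<forall>a\<in>Cr G. \<phi> (invol G a) = invol H (\<phi> a))"

end

theory Submission
  imports Defs
begin

locale gpd =
  fixes G :: "'g groupoid"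
  assumes gp: "is_groupoid G"
begin

abbreviation "d \<equiv> gsrc G"
abbreviation "r \<equiv> grng G"
abbreviation "m \<equiv> gmul G"
abbreviation "i \<equiv> ginv G"

lemma units_iff: "u \<in> units G \<longleftrightarrow> d u = u"
  using gp unfolding is_groupoid_def units_def by (metis rangeI)

lemma d_unit[simp]: "d a \<in> units G" by (simp add: units_def)
lemma r_unit[simp]: "r a \<in> units G" using gp unfolding is_groupoid_def by auto
lemma dd[simp]: "d (d a) = d a" using units_iff d_unit by blast
lemma dr[simp]: "d (r a) = r a" using units_iff r_unit by blast
lemma unit_r: "u \<in> units G \<Longrightarrow> r u = u" using gp unfolding is_groupoid_def by auto
lemma rd[simp]: "r (d a) = d a" using unit_r d_unit by blast
lemma rr[simp]: "r (r a) = r a" using unit_r r_unit by blast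
lemma d_m[simp]: "d a = r b \<Longrightarrow> d (m a b) = d b" using gp unfolding is_groupoid_def by auto
lemma r_m[simp]: "d a = r b \<Longrightarrow> r (m a b) = r a" using gp unfolding is_groupoid_def by auto
lemma assoc: "d a = r b \<Longrightarrow> d b = r c \<Longrightarrow> m (m a b) c = m a (m b c)"
  using gp unfolding is_groupoid_def by auto
lemma m_r[simp]: "m (r a) a = a" using gp unfolding is_groupoid_def by auto
lemma m_d[simp]: "m a (d a) = a" using gp unfolding is_groupoid_def by auto
lemma d_i[simp]: "d (i a) = r a" using gp unfolding is_groupoid_def by auto
lemma r_i[simp]: "r (i a) = d a" using gp unfolding is_groupoid_def by auto
lemma m_i[simp]: "m a (i a) = r a" using gp unfolding is_groupoid_def by auto
lemma i_m[simp]: "m (i a) a = d a" using gp unfolding is_groupoid_def by auto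

lemma ii[simp]: "i (i a) = a"
proof -
  have "i (i a) = m (i (i a)) (d a)" by (metis m_d d_i r_i)
  also have "\<dots> = m (i (i a)) (m (i a) a)" by simp
  also have "\<dots> = m (m (i (i a)) (i a)) a" by (rule assoc[symmetric]) auto
  also have "\<dots> = a" by simp
  finally show ?thesis .
qed

lemma i_unit: "u \<in> units G \<Longrightarrow> i u = u"
  by (metis m_r m_i r_i units_iff unit_r)

lemma i_d[simp]: "i (d a) = d a" by (simp add: i_unit)
lemma i_r[simp]: "i (r a) = r a" by (simp add: i_unit)

lemma cancel_left: assumes "d a = r b" "d a = r c" "m a b = m a c" shows "b = c"
proof -
  have "b = m (r b) b" by simp
  also have "r b = m (i a) a" using assms(1) by simp
  also have "m (m (i a) a) b = m (i a) (m a b)" using assms(1) by (intro assoc) auto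
  also have "\<dots> = m (i a) (m a c)" using assms by simp
  also have "\<dots> = m (m (i a) a) c" using assms(2) by (intro assoc[symmetric]) auto
  also have "m (i a) a = r c" using assms(2) by simp
  also have "m (r c) c = c" by simp
  finally show ?thesis .
qed

lemma cancel_right: assumes "d b = r a" "d c = r a" "m b a = m c a" shows "b = c"
proof -
  have "b = m b (d b)" by simp
  also have "d b = m a (i a)" using assms(1) by simp
  also have "m b (m a (i a)) = m (m b a) (i a)" using assms(1) by (intro assoc[symmetric]) auto
  also have "\<dots> = m (m c a) (i a)" using assms by simp
  also have "\<dots> = m c (m a (i a))" using assms(2) by (intro assoc) auto
  also have "m a (i a) = d c" using assms(2) by simp
  also have "m c (d c) = c" by simp
  finally show ?thesis .
qed

lemma i_mult: assumes "d a = r b" shows "i (m a b) = m (i b) (i a)"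
proof -
  have c1: "d (m a b) = r (m (i b) (i a))" using assms by simp
  have "m (m a b) (m (i b) (i a)) = m a (m b (m (i b) (i a)))"
    using assms by (intro assoc) auto
  also have "m b (m (i b) (i a)) = m (m b (i b)) (i a)" using assms by (intro assoc[symmetric]) auto
  also have "m b (i b) = r (i a)" using assms by simp
  also have "m (r (i a)) (i a) = i a" by (rule m_r)
  also have "m a (i a) = m (m a b) (i (m a b))" using assms by simp
  finally have e: "m (m a b) (m (i b) (i a)) = m (m a b) (i (m a b))" .
  show ?thesis by (rule cancel_left[OF c1 _ e, symmetric]) simp
qed

lemma m_unit_left: "u \<in> units G \<Longrightarrow> u = r a \<Longrightarrow> m u a = a" by simp
lemma m_unit_right: "u \<in> units G \<Longrightarrow> u = d a \<Longrightarrow> m a u = a" by simp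

lemma unit_eq: assumes "d a = r b" "m a b \<in> units G" shows "b = i a"
proof -
  have "m a b = r a" using assms units_iff by (metis r_m unit_r)
  hence e: "m a b = m a (i a)" by simp
  show ?thesis by (rule cancel_left[OF assms(1) _ e]) simp
qed

end

lemma infsum_single_pt:
  fixes f :: "'a \<Rightarrow> 'b::{comm_monoid_add,t2_space}"
  assumes "b \<in> S" "\<And>x. x \<in> S \<Longrightarrow> x \<noteq> b \<Longrightarrow> f x = 0"
  shows "infsum f S = f b"
proof -
  have "infsum f S = infsum f {b}" by (rule infsum_cong_neutral) (use assms in auto)
  thus ?thesis by simp
qed

context gpd begin

lemma fiberI[simp]: "\<alpha> \<in> fiber G x \<longleftrightarrow> d \<alpha> = x" by (simp add: fiber_def)

lemma conv_single:
  assumes "d \<beta> = d \<gamma>" "\<And>\<delta>. d \<delta> = d \<gamma> \<Longrightarrow> \<delta> \<noteq> \<beta> \<Longrightarrow> a (m \<gamma> (i \<delta>)) * b \<delta> = 0"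
  shows "conv G a b \<gamma> = a (m \<gamma> (i \<beta>)) * b \<beta>"
  unfolding conv_def by (rule infsum_single_pt) (use assms in auto)

lemma conv_none:
  assumes "\<And>\<delta>. d \<delta> = d \<gamma> \<Longrightarrow> a (m \<gamma> (i \<delta>)) * b \<delta> = 0"
  shows "conv G a b \<gamma> = 0"
  unfolding conv_def by (rule infsum_0) (use assms in auto)

lemma conv_bis:
  assumes "\<And>x. x \<notin> B \<Longrightarrow> b x = 0" "inj_on d B" "\<beta> \<in> B" "d \<beta> = d \<gamma>"
  shows "conv G a b \<gamma> = a (m \<gamma> (i \<beta>)) * b \<beta>"
proof (rule conv_single)
  show "d \<beta> = d \<gamma>" by (rule assms(4))
  fix \<delta> assume h: "d \<delta> = d \<gamma>" "\<delta> \<noteq> \<beta>"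
  have "\<delta> \<notin> B"
  proof
    assume "\<delta> \<in> B"
    with assms(2,3) h have "\<delta> = \<beta>" unfolding inj_on_def using assms(4) by metis
    with h show False by simp
  qed
  thus "a (m \<gamma> (i \<delta>)) * b \<delta> = 0" using assms(1) by simp
qed

lemma conv_bis_none:
  assumes "\<And>x. x \<notin> B \<Longrightarrow> b x = 0" "\<not> (\<exists>\<beta>\<in>B. d \<beta> = d \<gamma>)"
  shows "conv G a b \<gamma> = 0"
proof (rule conv_none)
  fix \<delta> assume "d \<delta> = d \<gamma>"
  hence "\<delta> \<notin> B" using assms(2) by blast
  thus "a (m \<gamma> (i \<delta>)) * b \<delta> = 0" using assms(1) by simp
qed

lemma conv_left_unit:
  assumes "\<And>x. x \<notin> units G \<Longrightarrow> f x = 0"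
  shows "conv G f b \<gamma> = f (r \<gamma>) * b \<gamma>"
proof -
  have "conv G f b \<gamma> = f (m \<gamma> (i \<gamma>)) * b \<gamma>"
  proof (rule conv_single)
    fix \<delta> assume h: "d \<delta> = d \<gamma>" "\<delta> \<noteq> \<gamma>"
    have "m \<gamma> (i \<delta>) \<notin> units G"
    proof
      assume "m \<gamma> (i \<delta>) \<in> units G"
      hence "i \<delta> = i \<gamma>" using h by (intro unit_eq) auto
      hence "\<delta> = \<gamma>" by (metis ii)
      thus False using h by simp
    qed
    thus "f (m \<gamma> (i \<delta>)) * b \<delta> = 0" using assms by simp
  qed simp
  thus ?thesis by simp
qed

lemma conv_invol_unit:
  assumes "\<And>x. x \<notin> B \<Longrightarrow> b x = 0" "inj_on d B" "\<beta> \<in> B" "d \<beta> = y"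
  shows "conv G (invol G a) b y = cnj (a \<beta>) * b \<beta>"
proof -
  have "conv G (invol G a) b y = invol G a (m y (i \<beta>)) * b \<beta>"
  proof (rule conv_bis[where B=B])
    show "\<And>x. x \<notin> B \<Longrightarrow> b x = 0" by (rule assms(1))
    show "d \<beta> = d y" unfolding assms(4)[symmetric] by simp
  qed (use assms in auto)
  also have "m y (i \<beta>) = i \<beta>" using m_r[of "i \<beta>"] unfolding r_i assms(4) .
  finally show ?thesis by (simp add: invol_def)
qed

end

lemma summable_nonneg_compare:
  fixes f g :: "'a \<Rightarrow> real"
  assumes "g summable_on A" "\<And>x. x \<in> A \<Longrightarrow> 0 \<le> f x \<and> f x \<le> g x"
  shows "f summable_on A"
proof -
  have g0: "norm (g x) = g x" if "x \<in> A" for x using assms(2)[OF that] by simp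
  have "(\<lambda>x. norm (g x)) summable_on A"
    using assms(1) g0 by (subst summable_on_cong[where g=g]) auto
  hence "(\<lambda>x. norm (f x)) summable_on A"
    by (rule Infinite_Sum.abs_summable_on_comparison_test) (use assms g0 in fastforce)
  moreover have "norm (f x) = f x" if "x \<in> A" for x using assms(2)[OF that] by simp
  ultimately show ?thesis by (subst (asm) summable_on_cong[where g=f]) auto
qed

context gpd begin

lemma regrep_bound:
  assumes hW: "\<And>\<gamma>. \<gamma> \<notin> W \<Longrightarrow> h \<gamma> = 0" and injd: "inj_on d W" and injr: "inj_on r W"
    and hM: "\<And>\<gamma>. cmod (h \<gamma>) \<le> M" and xi: "l2 (fiber G x) \<xi>"
  shows "l2 (fiber G x) (regrep G h x \<xi>) \<and>
         l2norm (fiber G x) (regrep G h x \<xi>) \<le> M * l2norm (fiber G x) \<xi>"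
proof -
  define X where "X = fiber G x"
  define D where "D = {\<gamma>\<in>X. \<exists>\<alpha>\<in>X. m \<gamma> (i \<alpha>) \<in> W}"
  define p where "p \<gamma> = (THE \<alpha>. \<alpha> \<in> X \<and> m \<gamma> (i \<alpha>) \<in> W)" for \<gamma>
  have M0: "0 \<le> M" using hM[of undefined] norm_ge_zero order_trans by blast
  have uniq: "\<alpha>1 = \<alpha>2" if "\<gamma> \<in> X" "\<alpha>1 \<in> X" "\<alpha>2 \<in> X" "m \<gamma> (i \<alpha>1) \<in> W" "m \<gamma> (i \<alpha>2) \<in> W"
    for \<gamma> \<alpha>1 \<alpha>2
  proof -
    have c1: "d \<gamma> = r (i \<alpha>1)" "d \<gamma> = r (i \<alpha>2)" using that by (auto simp: X_def)
    have "r (m \<gamma> (i \<alpha>1)) = r (m \<gamma> (i \<alpha>2))" using c1 by simp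
    hence "m \<gamma> (i \<alpha>1) = m \<gamma> (i \<alpha>2)" using injr that unfolding inj_on_def by blast
    hence "i \<alpha>1 = i \<alpha>2" by (rule cancel_left[OF c1(1) c1(2)])
    thus ?thesis by (metis ii)
  qed
  have pD: "p \<gamma> \<in> X \<and> m \<gamma> (i (p \<gamma>)) \<in> W" if gD: "\<gamma> \<in> D" for \<gamma>
  proof -
    obtain \<alpha> where a: "\<alpha> \<in> X" "m \<gamma> (i \<alpha>) \<in> W" using gD unfolding D_def by blast
    have "\<exists>!\<alpha>. \<alpha> \<in> X \<and> m \<gamma> (i \<alpha>) \<in> W"
      using a uniq gD unfolding D_def by blast
    thus ?thesis unfolding p_def by (rule theI')
  qed
  have rep_D: "regrep G h x \<xi> \<gamma> = h (m \<gamma> (i (p \<gamma>))) * \<xi> (p \<gamma>)" if "\<gamma> \<in> D" for \<gamma>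
    unfolding regrep_def
  proof (rule infsum_single_pt)
    show "p \<gamma> \<in> fiber G x" using pD[OF that] by (simp add: X_def)
    fix \<alpha> assume "\<alpha> \<in> fiber G x" "\<alpha> \<noteq> p \<gamma>"
    hence "m \<gamma> (i \<alpha>) \<notin> W" using uniq[of \<gamma> \<alpha> "p \<gamma>"] pD[OF that] that
      unfolding D_def X_def by blast
    thus "h (m \<gamma> (i \<alpha>)) * \<xi> \<alpha> = 0" using hW by simp
  qed
  have rep_nD: "regrep G h x \<xi> \<gamma> = 0" if "\<gamma> \<in> X - D" for \<gamma>
    unfolding regrep_def
  proof (rule infsum_0)
    fix \<alpha> assume "\<alpha> \<in> fiber G x"
    hence "m \<gamma> (i \<alpha>) \<notin> W" using that unfolding D_def X_def by blast
    thus "h (m \<gamma> (i \<alpha>)) * \<xi> \<alpha> = 0" using hW by simp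
  qed
  have pinj: "inj_on p D"
  proof (rule inj_onI)
    fix \<gamma>1 \<gamma>2 assume g: "\<gamma>1 \<in> D" "\<gamma>2 \<in> D" "p \<gamma>1 = p \<gamma>2"
    define \<alpha> where "\<alpha> = p \<gamma>1"
    have w: "m \<gamma>1 (i \<alpha>) \<in> W" "m \<gamma>2 (i \<alpha>) \<in> W"
      using pD[OF g(1)] pD[OF g(2)] g(3) by (simp_all add: \<alpha>_def)
    have c: "d \<gamma>1 = r (i \<alpha>)" "d \<gamma>2 = r (i \<alpha>)"
      using pD[OF g(1)] pD[OF g(2)] g(1,2) g(3) by (auto simp: \<alpha>_def X_def D_def)
    have "d (m \<gamma>1 (i \<alpha>)) = d (m \<gamma>2 (i \<alpha>))" using c by simp
    hence "m \<gamma>1 (i \<alpha>) = m \<gamma>2 (i \<alpha>)" using injd w unfolding inj_on_def by blast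
    thus "\<gamma>1 = \<gamma>2" by (rule cancel_right[OF c(1) c(2)])
  qed
  have pX: "p ` D \<subseteq> X" using pD by auto
  have DX: "D \<subseteq> X" by (auto simp: D_def)
  define q where "q = (\<lambda>\<alpha>. (cmod (\<xi> \<alpha>))\<^sup>2)"
  have q0: "0 \<le> q \<alpha>" for \<alpha> by (simp add: q_def)
  have qX: "q summable_on X" using xi unfolding l2_def q_def X_def .
  have qpD: "q summable_on p ` D" by (rule summable_on_subset_banach[OF qX pX])
  have qp: "(q \<circ> p) summable_on D" using summable_on_reindex[OF pinj, of q] qpD by metis
  hence Mqp: "(\<lambda>\<gamma>. M\<^sup>2 * q (p \<gamma>)) summable_on D"
    using summable_on_cmult_right[of "q \<circ> p" D "M\<^sup>2"] by (simp add: o_def)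
  define k where "k \<gamma> = (if \<gamma> \<in> D then M\<^sup>2 * q (p \<gamma>) else 0)" for \<gamma>
  have kX: "k summable_on X"
    using Mqp DX by (subst summable_on_cong_neutral[where g="\<lambda>\<gamma>. M\<^sup>2 * q (p \<gamma>)" and T=D])
      (auto simp: k_def)
  define g where "g = (\<lambda>\<gamma>. (cmod (regrep G h x \<xi> \<gamma>))\<^sup>2)"
  have gk: "0 \<le> g \<gamma> \<and> g \<gamma> \<le> k \<gamma>" if "\<gamma> \<in> X" for \<gamma>
  proof (cases "\<gamma> \<in> D")
    case True
    have "g \<gamma> = (cmod (h (m \<gamma> (i (p \<gamma>)))))\<^sup>2 * q (p \<gamma>)"
      by (simp add: g_def rep_D[OF True] q_def norm_mult power_mult_distrib)
    also have "\<dots> \<le> M\<^sup>2 * q (p \<gamma>)"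
      by (intro mult_right_mono power_mono hM q0) simp
    finally show ?thesis using True by (simp add: g_def k_def)
  next
    case False
    thus ?thesis using rep_nD that by (simp add: g_def k_def)
  qed
  have gX: "g summable_on X" by (rule summable_nonneg_compare[OF kX gk])
  have "infsum g X \<le> infsum k X" by (rule infsum_mono[OF gX kX]) (use gk in auto)
  also have "infsum k X = infsum (\<lambda>\<gamma>. M\<^sup>2 * q (p \<gamma>)) D"
    using DX by (intro infsum_cong_neutral) (auto simp: k_def)
  also have "\<dots> = M\<^sup>2 * infsum (q \<circ> p) D"
    using infsum_cmult_right[of "M\<^sup>2" "q \<circ> p" D] qp by (simp add: o_def)
  also have "infsum (q \<circ> p) D = infsum q (p ` D)" by (rule infsum_reindex[OF pinj, symmetric])
  also have "infsum q (p ` D) \<le> infsum q X"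
    by (rule infsum_mono_neutral[OF qpD qX]) (use pX q0 in auto)
  finally have le: "infsum g X \<le> M\<^sup>2 * infsum q X"
    by (simp add: mult_left_mono)
  have "l2norm X (regrep G h x \<xi>) = sqrt (infsum g X)" by (simp add: l2norm_def g_def)
  also have "\<dots> \<le> sqrt (M\<^sup>2 * infsum q X)" using le by simp
  also have "\<dots> = M * l2norm X \<xi>" using M0 by (simp add: real_sqrt_mult l2norm_def q_def)
  finally show ?thesis using gX by (simp add: l2_def X_def g_def)
qed

lemma l2_zero: "l2 X (\<lambda>_. 0)" and l2norm_zero: "l2norm X (\<lambda>_. 0) = 0"
  by (simp_all add: l2_def l2norm_def)

lemma opnorm_le:
  assumes hW: "\<And>\<gamma>. \<gamma> \<notin> W \<Longrightarrow> h \<gamma> = 0" and injd: "inj_on d W" and injr: "inj_on r W"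
    and hM: "\<And>\<gamma>. cmod (h \<gamma>) \<le> M"
  shows "opnorm_at G h x \<le> M"
    and "bdd_above {l2norm (fiber G x) (regrep G h x \<xi>) | \<xi>.
                           l2 (fiber G x) \<xi> \<and> l2norm (fiber G x) \<xi> \<le> 1}"
proof -
  have M0: "0 \<le> M" using hM[of undefined] norm_ge_zero order_trans by blast
  let ?S = "{l2norm (fiber G x) (regrep G h x \<xi>) | \<xi>.
                           l2 (fiber G x) \<xi> \<and> l2norm (fiber G x) \<xi> \<le> 1}"
  have ub: "s \<le> M" if "s \<in> ?S" for s
  proof -
    obtain \<xi> where s: "s = l2norm (fiber G x) (regrep G h x \<xi>)" "l2 (fiber G x) \<xi>"
      "l2norm (fiber G x) \<xi> \<le> 1" using \<open>s \<in> ?S\<close> by blast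
    have "s \<le> M * l2norm (fiber G x) \<xi>" using regrep_bound[OF hW injd injr hM s(2)] s(1) by simp
    also have "\<dots> \<le> M * 1" by (rule mult_left_mono[OF s(3) M0])
    finally show ?thesis by simp
  qed
  have "l2norm (fiber G x) (regrep G h x (\<lambda>_. 0)) \<in> ?S"
    using l2_zero[of "fiber G x"] l2norm_zero[of "fiber G x"] by auto
  hence ne: "?S \<noteq> {}" by blast
  show "opnorm_at G h x \<le> M" unfolding opnorm_at_def by (rule cSup_least[OF ne ub])
  show "bdd_above ?S" by (rule bdd_aboveI[where M=M]) (rule ub)
qed

lemma rnorm_le:
  assumes hW: "\<And>\<gamma>. \<gamma> \<notin> W \<Longrightarrow> h \<gamma> = 0" and injd: "inj_on d W" and injr: "inj_on r W"
    and hM: "\<And>\<gamma>. cmod (h \<gamma>) \<le> M"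
  shows "rnorm G h \<le> M" and "bdd_above (opnorm_at G h ` units G)"
proof -
  have ne: "opnorm_at G h ` units G \<noteq> {}" using d_unit by blast
  show "rnorm G h \<le> M" unfolding rnorm_def
  proof (rule cSup_least[OF ne])
    fix y assume "y \<in> opnorm_at G h ` units G"
    then obtain u where "y = opnorm_at G h u" by blast
    thus "y \<le> M" using opnorm_le(1)[OF hW injd injr hM, where x=u] by simp
  qed
  show "bdd_above (opnorm_at G h ` units G)"
    by (rule bdd_aboveI2[where M=M]) (rule opnorm_le(1)[OF hW injd injr hM])
qed

lemma le_rnorm:
  assumes hW: "\<And>\<gamma>. \<gamma> \<notin> W \<Longrightarrow> h \<gamma> = 0" and injd: "inj_on d W" and injr: "inj_on r W"
    and hM: "\<And>\<gamma>. cmod (h \<gamma>) \<le> M"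
  shows "cmod (h w) \<le> rnorm G h"
proof -
  define x where "x = d w"
  define X where "X = fiber G x"
  define \<xi> where "\<xi> = (\<lambda>\<alpha>. if \<alpha> = x then (1::complex) else 0)"
  have xX: "x \<in> X" by (simp add: X_def x_def)
  have wX: "w \<in> X" by (simp add: X_def x_def)
  have "(\<lambda>\<alpha>. (cmod (\<xi> \<alpha>))\<^sup>2) summable_on X \<longleftrightarrow> (\<lambda>\<alpha>. (cmod (\<xi> \<alpha>))\<^sup>2) summable_on {x}"
    by (rule summable_on_cong_neutral) (use xX in \<open>auto simp: \<xi>_def\<close>)
  hence l2xi: "l2 X \<xi>" by (simp add: l2_def)
  have "infsum (\<lambda>\<alpha>. (cmod (\<xi> \<alpha>))\<^sup>2) X = (cmod (\<xi> x))\<^sup>2"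
    by (rule infsum_single_pt[OF xX]) (simp add: \<xi>_def)
  hence nxi: "l2norm X \<xi> = 1" by (simp add: l2norm_def \<xi>_def)
  have rep: "regrep G h x \<xi> \<gamma> = h \<gamma>" if "\<gamma> \<in> X" for \<gamma>
  proof -
    have "regrep G h x \<xi> \<gamma> = h (m \<gamma> (i x)) * \<xi> x"
      unfolding regrep_def by (rule infsum_single_pt[OF xX[unfolded X_def]]) (simp add: \<xi>_def)
    also have "x = d \<gamma>" using that by (simp add: X_def)
    hence "m \<gamma> (i x) = \<gamma>" by simp
    finally show ?thesis by (simp add: \<xi>_def)
  qed
  have bnd: "l2 X (regrep G h x \<xi>)"
    using regrep_bound[OF hW injd injr hM l2xi[unfolded X_def]] by (simp add: X_def)
  have "(cmod (h w))\<^sup>2 = sum (\<lambda>\<gamma>. (cmod (regrep G h x \<xi> \<gamma>))\<^sup>2) {w}" using rep wX by simp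
  also have "\<dots> \<le> infsum (\<lambda>\<gamma>. (cmod (regrep G h x \<xi> \<gamma>))\<^sup>2) X"
    by (rule finite_sum_le_infsum) (use bnd wX in \<open>auto simp: l2_def\<close>)
  finally have "cmod (h w) \<le> l2norm X (regrep G h x \<xi>)"
    unfolding l2norm_def by (simp add: real_le_rsqrt)
  also have "\<dots> \<le> opnorm_at G h x" unfolding opnorm_at_def
    by (rule cSup_upper) (use l2xi nxi opnorm_le(2)[OF hW injd injr hM, where x=x] in \<open>auto simp: X_def\<close>)
  also have "\<dots> \<le> rnorm G h" unfolding rnorm_def
    by (rule cSup_upper) (use rnorm_le(2)[OF hW injd injr hM] in \<open>auto simp: x_def\<close>)
  finally show ?thesis .
qed

end

lemma hausdorff_euclidean_t2: "Hausdorff_space (euclidean :: ('a::t2_space) topology)"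
  unfolding Hausdorff_space_def disjnt_def using separation_t2 by auto

lemma bump_exists:
  fixes A :: "('a::t2_space) set"
  assumes lc: "locally compact (UNIV :: 'a set)" and A: "open A" "p \<in> A"
  shows "\<exists>f. f \<in> Cc_on A \<and> f p = 1 \<and> (\<forall>x. cmod (f x) \<le> 1)"
proof -
  obtain U K where UK: "open U" "compact K" "p \<in> U" "U \<subseteq> K" "K \<subseteq> A"
    using lc A unfolding locally_def by (metis open_openin open_subopen subtopology_UNIV)
  have lcs: "locally_compact_space (euclidean :: 'a topology)"
    unfolding locally_compact_space_def using lc unfolding locally_def
    by (metis UNIV_I compactin_euclidean_iff open_UNIV open_openin subtopology_UNIV)
  have crs: "completely_regular_space (euclidean :: 'a topology)"
    by (rule locally_compact_regular_imp_completely_regular_space[OF lcs]) (simp add: hausdorff_euclidean_t2)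
  obtain g where g: "continuous_map euclidean (subtopology euclidean {0..1::real}) g"
    "g ` (UNIV - U) \<subseteq> {0}" "g ` {p} \<subseteq> {1}"
    by (rule Urysohn_completely_regular_compact_closed[of 0 1 euclidean "{p}" "UNIV - U"])
      (use crs UK in \<open>auto simp: disjnt_def closed_Diff\<close>)
  have gc: "continuous_on UNIV g" and g01: "\<And>x. g x \<in> {0..1}"
    using g(1) unfolding continuous_map_in_subtopology by auto
  define f where "f x = complex_of_real (g x)" for x
  have fc: "continuous_on UNIV f" unfolding f_def by (intro continuous_intros gc)
  have supp: "{x. f x \<noteq> 0} \<subseteq> K" using g(2) UK by (force simp: f_def)
  have ck: "closed K" using UK compact_imp_closed by blast
  have cl: "closure {x. f x \<noteq> 0} \<subseteq> K" by (rule closure_minimal[OF supp ck])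
  have "compact (closure {x. f x \<noteq> 0})"
    using compact_Int_closed[OF UK(2) closed_closure[of "{x. f x \<noteq> 0}"]] cl
    by (simp add: Int_absorb1)
  hence "f \<in> Cc_on A" using fc cl UK by (auto simp: Cc_on_def)
  moreover have "f p = 1" using g(3) by (simp add: f_def)
  moreover have "cmod (f x) \<le> 1" for x using g01[of x] by (simp add: f_def)
  ultimately show ?thesis by blast
qed

locale etale = gpd G for G :: "('g::t2_space) groupoid" +
  assumes et: "etale_groupoid G"
begin

lemma lc: "locally compact (UNIV :: 'g set)" using et by (simp add: etale_groupoid_def)
lemma cont_i: "continuous_on UNIV i" using et by (simp add: etale_groupoid_def)
lemma cont_m: "continuous_on {(a, b). d a = r b} (\<lambda>(a, b). m a b)"
  using et by (simp add: etale_groupoid_def)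
lemma local_homeo: "\<exists>U. open U \<and> \<gamma> \<in> U \<and> open (d ` U) \<and> (\<exists>g. homeomorphism U (d ` U) d g)"
  using et by (simp add: etale_groupoid_def)

lemma cont_d: "continuous_on UNIV d"
proof -
  have "isCont d \<gamma>" for \<gamma>
  proof -
    obtain U g where U: "open U" "\<gamma> \<in> U" "homeomorphism U (d ` U) d g" using local_homeo by blast
    hence "continuous_on U d" by (simp add: homeomorphism_def)
    thus ?thesis using U continuous_on_eq_continuous_at by blast
  qed
  thus ?thesis by (simp add: continuous_at_imp_continuous_on)
qed

lemma cont_r: "continuous_on UNIV r"
proof -
  have "r = d \<circ> i" by (auto simp: fun_eq_iff)
  thus ?thesis using continuous_on_compose[OF cont_i] cont_d
    by (metis continuous_on_subset subset_UNIV)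
qed

lemma open_d_image: assumes "open S" shows "open (d ` S)"
proof -
  have "\<exists>T. open T \<and> d \<gamma> \<in> T \<and> T \<subseteq> d ` S" if "\<gamma> \<in> S" for \<gamma>
  proof -
    obtain U g where U: "open U" "\<gamma> \<in> U" "open (d ` U)" "homeomorphism U (d ` U) d g"
      using local_homeo by blast
    have "openin (top_of_set U) (S \<inter> U)" unfolding openin_open using assms by blast
    hence "openin (top_of_set (d ` U)) (d ` (S \<inter> U))" by (rule homeomorphism_imp_open_map[OF U(4)])
    hence "open (d ` (S \<inter> U))" using U(3) openin_open_trans by blast
    thus ?thesis using that U by blast
  qed
  thus ?thesis by (subst open_subopen) blast
qed

lemma bis_homeo: assumes "open Ob" "inj_on d Ob" obtains s where "homeomorphism Ob (d ` Ob) d s"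
proof (rule homeomorphism_injective_open_map[where S=Ob and f=d])
  show "continuous_on Ob d" using cont_d continuous_on_subset by blast
  show "inj_on d Ob" by (rule assms(2))
  fix U assume "openin (top_of_set Ob) U"
  hence "open U" using assms(1) openin_open_trans by blast
  hence "open (d ` U)" by (rule open_d_image)
  moreover have "d ` U \<subseteq> d ` Ob" using \<open>openin (top_of_set Ob) U\<close> openin_imp_subset by blast
  ultimately show "openin (top_of_set (d ` Ob)) (d ` U)" by (simp add: openin_open_eq open_d_image assms)
qed auto

lemma i_image: "i ` S = i -` S"
  by (auto simp: image_iff) (metis ii)

lemma open_i_image: assumes "open S" shows "open (i ` S)"
  unfolding i_image using open_vimage[OF assms cont_i] by simp

lemma inv_bis: assumes "Ob \<in> open_bisections G" shows "i ` Ob \<in> open_bisections G"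
proof -
  have "inj_on d (i ` Ob)" using assms unfolding open_bisections_def inj_on_def by auto
  moreover have "inj_on r (i ` Ob)" using assms unfolding open_bisections_def inj_on_def
    by auto
  ultimately show ?thesis using assms open_i_image by (simp add: open_bisections_def)
qed

lemma bis_nbhd: "\<exists>Ob. Ob \<in> open_bisections G \<and> \<gamma> \<in> Ob"
proof -
  obtain U1 g1 where U1: "open U1" "\<gamma> \<in> U1" "homeomorphism U1 (d ` U1) d g1"
    using local_homeo by blast
  obtain U2 g2 where U2: "open U2" "i \<gamma> \<in> U2" "homeomorphism U2 (d ` U2) d g2"
    using local_homeo by blast
  have inj1: "inj_on d U1" using U1(3) homeomorphism_apply1 unfolding inj_on_def by metis
  have inj2: "inj_on d U2" using U2(3) homeomorphism_apply1 unfolding inj_on_def by metis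
  define Ob where "Ob = U1 \<inter> i -` U2"
  have "open Ob" unfolding Ob_def using U1 U2 by (intro open_Int open_vimage cont_i) auto
  moreover have "inj_on d Ob" using inj1 unfolding Ob_def inj_on_def by auto
  moreover have "inj_on r Ob" using inj2 unfolding Ob_def inj_on_def by auto (metis ii d_i)
  moreover have "\<gamma> \<in> Ob" using U1 U2 by (simp add: Ob_def)
  ultimately show ?thesis unfolding open_bisections_def by blast
qed

lemma units_bis: "inj_on d (units G)" "inj_on r (units G)"
  by (auto simp: inj_on_def units_iff unit_r)

end

definition bislike :: "'g groupoid \<Rightarrow> 'g set \<Rightarrow> bool" where
  "bislike G U \<longleftrightarrow> inj_on (gsrc G) U \<and> inj_on (grng G) U"

lemma Cc_vanish: assumes "f \<in> Cc_on U" "x \<notin> U" shows "f x = 0"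
proof -
  have "{x. f x \<noteq> 0} \<subseteq> U" using assms(1) closure_subset unfolding Cc_on_def by (metis (no_types, lifting) mem_Collect_eq order_trans)
  thus ?thesis using assms(2) by auto
qed

lemma Cc_mono: "f \<in> Cc_on U \<Longrightarrow> U \<subseteq> U' \<Longrightarrow> f \<in> Cc_on U'"
  unfolding Cc_on_def by auto

lemma C0_onE:
  assumes "a \<in> C0_on G U"
  obtains f where "\<forall>n. f n \<in> Cc_on U" "rcauchy G f" "\<forall>\<gamma>. (\<lambda>n. f n \<gamma>) \<longlonglongrightarrow> a \<gamma>"
proof -
  have "\<exists>f. (\<forall>n. f n \<in> Cc_on U) \<and> rcauchy G f \<and> (\<forall>\<gamma>. (\<lambda>n. f n \<gamma>) \<longlonglongrightarrow> a \<gamma>)"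
    using assms by (simp add: C0_on_def)
  then obtain f where "(\<forall>n. f n \<in> Cc_on U) \<and> rcauchy G f \<and> (\<forall>\<gamma>. (\<lambda>n. f n \<gamma>) \<longlonglongrightarrow> a \<gamma>)" by (elim exE)
  thus ?thesis using that by (elim conjE)
qed

lemma C0_onI:
  assumes "\<forall>n. f n \<in> Cc_on U" "rcauchy G f" "\<forall>\<gamma>. (\<lambda>n. f n \<gamma>) \<longlonglongrightarrow> a \<gamma>"
  shows "a \<in> C0_on G U"
  unfolding C0_on_def by (rule CollectI, rule exI[of _ f]) (intro conjI assms)

lemma Cc_bounded: assumes "f \<in> Cc_on U" shows "\<exists>M\<ge>0. \<forall>x. cmod (f x) \<le> M"
proof -
  let ?K = "closure {x. f x \<noteq> 0}"
  have c: "continuous_on UNIV f" "compact ?K" using assms by (simp_all add: Cc_on_def)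
  have fc: "continuous_on ?K f" by (rule continuous_on_subset[OF c(1) subset_UNIV])
  have cK: "compact (f ` ?K)" by (rule compact_continuous_image[OF fc c(2)])
  obtain M where M: "\<forall>y\<in>f ` ?K. norm y \<le> M"
    using compact_imp_bounded[OF cK] unfolding bounded_iff by (elim exE)
  have "cmod (f x) \<le> max M 0" for x
  proof (cases "f x = 0")
    case False
    hence "x \<in> ?K" using closure_subset[of "{x. f x \<noteq> 0}"] by auto
    hence "cmod (f x) \<le> M" using M by simp
    thus ?thesis by linarith
  qed simp
  thus ?thesis by (intro exI[of _ "max M 0"]) auto
qed

context etale begin

lemma C0_vanish: assumes "a \<in> C0_on G U" "x \<notin> U" shows "a x = 0"
proof -
  obtain f where f: "\<forall>n. f n \<in> Cc_on U" "\<forall>\<gamma>. (\<lambda>n. f n \<gamma>) \<longlonglongrightarrow> a \<gamma>"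
    using assms(1) by (rule C0_onE)
  have "(\<lambda>n. f n x) = (\<lambda>n. 0)" by (rule ext) (rule Cc_vanish[OF f(1)[rule_format] assms(2)])
  hence "(\<lambda>n. f n x) \<longlonglongrightarrow> 0" by simp
  thus "a x = 0" using LIMSEQ_unique[OF f(2)[rule_format, of x]] by simp
qed

lemma C0_mono: assumes "U \<subseteq> U'" shows "C0_on G U \<subseteq> C0_on G U'"
proof
  fix a assume "a \<in> C0_on G U"
  then obtain f where f: "\<forall>n. f n \<in> Cc_on U" "rcauchy G f" "\<forall>\<gamma>. (\<lambda>n. f n \<gamma>) \<longlonglongrightarrow> a \<gamma>"
    by (rule C0_onE)
  have "\<forall>n. f n \<in> Cc_on U'" using Cc_mono[OF f(1)[rule_format] assms] by simp
  thus "a \<in> C0_on G U'" by (rule C0_onI[of f]) (use f in auto)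
qed

lemma rnorm_zero: "rnorm G (\<lambda>\<gamma>. 0) \<le> 0"
  by (rule rnorm_le(1)[where W="{}"]) auto

lemma Cc_C0: assumes "f \<in> Cc_on U" shows "f \<in> C0_on G U"
proof -
  have "rcauchy G (\<lambda>n. f)" unfolding rcauchy_def
  proof (intro allI impI)
    fix e :: real assume "e > 0"
    have z: "rnorm G (\<lambda>\<gamma>. f \<gamma> - f \<gamma>) \<le> 0" using rnorm_zero by simp
    thus "\<exists>N. \<forall>m\<ge>N. \<forall>n\<ge>N. rnorm G (\<lambda>\<gamma>. f \<gamma> - f \<gamma>) < e" using \<open>e > 0\<close> by auto
  qed
  show ?thesis by (rule C0_onI[of "\<lambda>n. f"]) (use assms \<open>rcauchy G (\<lambda>n. f)\<close> in simp_all)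
qed

lemma diff_le_rnorm:
  assumes "bislike G U" "f \<in> Cc_on U" "g \<in> Cc_on U"
  shows "cmod (f x - g x) \<le> rnorm G (\<lambda>\<gamma>. f \<gamma> - g \<gamma>)"
proof -
  obtain M1 where M1: "\<forall>x. cmod (f x) \<le> M1" using Cc_bounded[OF assms(2)] by blast
  obtain M2 where M2: "\<forall>x. cmod (g x) \<le> M2" using Cc_bounded[OF assms(3)] by blast
  note M = M1[rule_format] M2[rule_format]
  show ?thesis
  proof (rule le_rnorm[where W=U and M="M1+M2"])
    show "\<And>\<gamma>. \<gamma> \<notin> U \<Longrightarrow> f \<gamma> - g \<gamma> = 0" using Cc_vanish[OF assms(2)] Cc_vanish[OF assms(3)] by simp
    show "inj_on d U" "inj_on r U" using assms(1) by (auto simp: bislike_def)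
    show "cmod (f \<gamma> - g \<gamma>) \<le> M1 + M2" for \<gamma>
      using norm_triangle_ineq4[of "f \<gamma>" "g \<gamma>"] M[of \<gamma>] by linarith
  qed
qed

lemma rcauchy_unif_bound:
  assumes "bislike G U" "\<forall>n. f n \<in> Cc_on U" "rcauchy G f"
  shows "\<exists>B. \<forall>n x. cmod (f n x) \<le> B"
proof -
  obtain N where N: "\<forall>m\<ge>N. \<forall>n\<ge>N. rnorm G (\<lambda>\<gamma>. f m \<gamma> - f n \<gamma>) < 1"
    using assms(3) unfolding rcauchy_def by (meson zero_less_one)
  have "\<forall>n. \<exists>M\<ge>0. \<forall>x. cmod (f n x) \<le> M"
  proof
    fix n show "\<exists>M\<ge>0. \<forall>x. cmod (f n x) \<le> M" by (rule Cc_bounded[where U=U]) (use assms(2) in simp)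
  qed
  then obtain B where B: "\<And>n x. cmod (f n x) \<le> B n" "\<And>n. 0 \<le> B n" by metis
  define S where "S = (\<Sum>k\<le>N. B k) + 1"
  have BS: "B k \<le> S - 1" if "k \<le> N" for k
    unfolding S_def using member_le_sum[of k "{..N}" B] B(2) that by auto
  have "cmod (f n x) \<le> S" for n x
  proof (cases "n \<le> N")
    case True thus ?thesis using B(1)[of n x] BS[of n] by linarith
  next
    case False
    have "cmod (f n x - f N x) \<le> rnorm G (\<lambda>\<gamma>. f n \<gamma> - f N \<gamma>)"
      by (rule diff_le_rnorm) (use assms in auto)
    also have "\<dots> < 1" using N False by auto
    finally show ?thesis using norm_triangle_ineq2[of "f n x" "f N x"] B(1)[of N x] BS[of N] by linarith
  qed
  thus ?thesis by blast
qed

lemma C0_unif: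
  assumes "bislike G U" "\<forall>n. f n \<in> Cc_on U" "rcauchy G f" "\<forall>\<gamma>. (\<lambda>n. f n \<gamma>) \<longlonglongrightarrow> a \<gamma>"
  shows "\<forall>e>0. \<exists>N. \<forall>n\<ge>N. \<forall>x. cmod (f n x - a x) \<le> e"
proof (intro allI impI)
  fix e :: real assume e: "e > 0"
  obtain N where N: "\<forall>m\<ge>N. \<forall>n\<ge>N. rnorm G (\<lambda>\<gamma>. f m \<gamma> - f n \<gamma>) < e"
    using assms(3) e unfolding rcauchy_def by meson
  have "cmod (f n x - a x) \<le> e" if "n \<ge> N" for n x
  proof (rule LIMSEQ_le_const2)
    show "(\<lambda>k. cmod (f n x - f k x)) \<longlonglongrightarrow> cmod (f n x - a x)"
      by (intro tendsto_intros assms(4)[rule_format])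
    have "cmod (f n x - f k x) \<le> e" if "k \<ge> N" for k
    proof -
      have "cmod (f n x - f k x) \<le> rnorm G (\<lambda>\<gamma>. f n \<gamma> - f k \<gamma>)"
        by (rule diff_le_rnorm) (use assms in auto)
      thus ?thesis using N \<open>n \<ge> N\<close> that by fastforce
    qed
    thus "\<exists>N. \<forall>k\<ge>N. cmod (f n x - f k x) \<le> e" by blast
  qed
  thus "\<exists>N. \<forall>n\<ge>N. \<forall>x. cmod (f n x - a x) \<le> e" by blast
qed

lemma C0_cont_bounded:
  assumes "bislike G U" "a \<in> C0_on G U"
  shows "continuous_on UNIV a" "\<exists>B. \<forall>x. cmod (a x) \<le> B"
proof -
  obtain f where f: "\<forall>n. f n \<in> Cc_on U" "rcauchy G f" "\<forall>\<gamma>. (\<lambda>n. f n \<gamma>) \<longlonglongrightarrow> a \<gamma>"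
    using assms(2) by (rule C0_onE)
  note u = C0_unif[OF assms(1) f]
  show "continuous_on UNIV a"
  proof (rule uniform_limit_theorem[where F=sequentially and f=f])
    show "\<forall>\<^sub>F n in sequentially. continuous_on UNIV (f n)" using f(1) by (simp add: Cc_on_def)
    show "uniform_limit UNIV f a sequentially"
    proof (rule uniform_limitI)
      fix e :: real assume "e > 0"
      then obtain N where N: "\<forall>n\<ge>N. \<forall>x. cmod (f n x - a x) \<le> e/2" using u by (meson half_gt_zero)
      show "\<forall>\<^sub>F n in sequentially. \<forall>x\<in>UNIV. dist (f n x) (a x) < e"
        unfolding eventually_sequentially
      proof (intro exI[of _ N] allI impI ballI)
        fix n x assume "N \<le> n"
        hence "cmod (f n x - a x) \<le> e/2" using N by blast
        thus "dist (f n x) (a x) < e" using \<open>e>0\<close> by (simp add: dist_norm)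
      qed
    qed
  qed simp
  obtain N where N: "\<forall>n\<ge>N. \<forall>x. cmod (f n x - a x) \<le> 1" using u by (meson zero_less_one)
  obtain M where M: "\<forall>x. cmod (f N x) \<le> M" using Cc_bounded f(1) by metis
  have "cmod (a x) \<le> M + 1" for x
  proof -
    have "cmod (a x) = cmod (f N x - (f N x - a x))" by simp
    also have "\<dots> \<le> cmod (f N x) + cmod (f N x - a x)" by (rule norm_triangle_ineq4)
    finally show ?thesis using N[rule_format, of N x] M[rule_format, of x] by linarith
  qed
  thus "\<exists>B. \<forall>x. cmod (a x) \<le> B" by blast
qed

end

lemma bislike_ob: "U \<in> open_bisections G \<Longrightarrow> bislike G U"
  by (simp add: open_bisections_def bislike_def)

lemma rcauchy_transfer:
  assumes "rcauchy G f" "rcauchy G h" "0 \<le> K"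
    "\<And>m n. rnorm G (\<lambda>\<gamma>. g m \<gamma> - g n \<gamma>) \<le> K * (rnorm G (\<lambda>\<gamma>. f m \<gamma> - f n \<gamma>) + rnorm G (\<lambda>\<gamma>. h m \<gamma> - h n \<gamma>))"
  shows "rcauchy G g"
  unfolding rcauchy_def
proof (intro allI impI)
  fix e :: real assume e: "e > 0"
  define e' where "e' = e / (2 * K + 1)"
  have e': "e' > 0" using e assms(3) by (simp add: e'_def)
  obtain N1 where N1: "\<forall>m\<ge>N1. \<forall>n\<ge>N1. rnorm G (\<lambda>\<gamma>. f m \<gamma> - f n \<gamma>) < e'"
    using assms(1) e' unfolding rcauchy_def by meson
  obtain N2 where N2: "\<forall>m\<ge>N2. \<forall>n\<ge>N2. rnorm G (\<lambda>\<gamma>. h m \<gamma> - h n \<gamma>) < e'"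
    using assms(2) e' unfolding rcauchy_def by meson
  have "rnorm G (\<lambda>\<gamma>. g m \<gamma> - g n \<gamma>) < e" if "m \<ge> max N1 N2" "n \<ge> max N1 N2" for m n
  proof -
    have a: "rnorm G (\<lambda>\<gamma>. f m \<gamma> - f n \<gamma>) < e'" "rnorm G (\<lambda>\<gamma>. h m \<gamma> - h n \<gamma>) < e'"
      using N1 N2 that by auto
    have "K * (rnorm G (\<lambda>\<gamma>. f m \<gamma> - f n \<gamma>) + rnorm G (\<lambda>\<gamma>. h m \<gamma> - h n \<gamma>)) \<le> K * (2 * e')"
      using a assms(3) by (intro mult_left_mono) auto
    also have "\<dots> < e" using e assms(3) unfolding e'_def by (simp add: field_simps)
    finally show ?thesis using assms(4)[of m n] by linarith
  qed
  thus "\<exists>N. \<forall>m\<ge>N. \<forall>n\<ge>N. rnorm G (\<lambda>\<gamma>. g m \<gamma> - g n \<gamma>) < e" by blast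
qed

lemma closure_Int_sub: "closure (A \<inter> B) \<subseteq> closure A \<inter> closure B"
  by (simp add: closure_mono)

context etale begin

lemma C0_mult:
  assumes bl: "bislike G U" and a: "a \<in> C0_on G U" and qc: "continuous_on UNIV q"
    and qB: "\<forall>x. cmod (q x) \<le> B" and sub: "U \<inter> closure {x. q x \<noteq> 0} \<subseteq> U'"
  shows "(\<lambda>\<gamma>. q \<gamma> * a \<gamma>) \<in> C0_on G U'"
proof -
  obtain f where f: "\<forall>n. f n \<in> Cc_on U" "rcauchy G f" "\<forall>\<gamma>. (\<lambda>n. f n \<gamma>) \<longlonglongrightarrow> a \<gamma>"
    using a by (rule C0_onE)
  have B0: "0 \<le> B" using qB norm_ge_zero order_trans by blast
  define g where "g n = (\<lambda>\<gamma>. q \<gamma> * f n \<gamma>)" for n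
  have gCc: "g n \<in> Cc_on U'" for n
  proof -
    have fn: "continuous_on UNIV (f n)" "compact (closure {x. f n x \<noteq> 0})" "closure {x. f n x \<noteq> 0} \<subseteq> U"
      using f(1) by (simp_all add: Cc_on_def)
    have s: "{x. g n x \<noteq> 0} = {x. f n x \<noteq> 0} \<inter> {x. q x \<noteq> 0}" by (auto simp: g_def)
    have cl: "closure {x. g n x \<noteq> 0} \<subseteq> closure {x. f n x \<noteq> 0} \<inter> closure {x. q x \<noteq> 0}"
      unfolding s by (rule closure_Int_sub)
    have "continuous_on UNIV (g n)" unfolding g_def by (intro continuous_intros qc fn(1))
    moreover have "closure {x. g n x \<noteq> 0} \<subseteq> U'" using cl fn(3) sub by blast
    moreover have "compact (closure {x. g n x \<noteq> 0})"
    proof -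
      have "closure {x. g n x \<noteq> 0} = closure {x. f n x \<noteq> 0} \<inter> closure {x. g n x \<noteq> 0}" using cl by blast
      thus ?thesis using compact_Int_closed[OF fn(2) closed_closure] by metis
    qed
    ultimately show ?thesis by (simp add: Cc_on_def)
  qed
  have "rcauchy G g"
  proof (rule rcauchy_transfer[OF f(2) f(2) B0])
    fix m n
    have "rnorm G (\<lambda>\<gamma>. g m \<gamma> - g n \<gamma>) \<le> B * rnorm G (\<lambda>\<gamma>. f m \<gamma> - f n \<gamma>)"
    proof (rule rnorm_le(1)[where W=U])
      show "\<And>\<gamma>. \<gamma> \<notin> U \<Longrightarrow> g m \<gamma> - g n \<gamma> = 0"
        using Cc_vanish[OF f(1)[rule_format, of m]] Cc_vanish[OF f(1)[rule_format, of n]]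
        by (simp add: g_def)
      show "inj_on d U" "inj_on r U" using bl by (auto simp: bislike_def)
      fix \<gamma>
      have "cmod (g m \<gamma> - g n \<gamma>) = cmod (q \<gamma>) * cmod (f m \<gamma> - f n \<gamma>)"
        by (simp add: g_def norm_mult[symmetric] right_diff_distrib)
      also have "\<dots> \<le> B * rnorm G (\<lambda>\<gamma>. f m \<gamma> - f n \<gamma>)"
        by (intro mult_mono qB[rule_format] diff_le_rnorm[OF bl] f(1)[rule_format] B0) simp
      finally show "cmod (g m \<gamma> - g n \<gamma>) \<le> B * rnorm G (\<lambda>\<gamma>. f m \<gamma> - f n \<gamma>)" .
    qed
    also have "\<dots> \<le> B * (rnorm G (\<lambda>\<gamma>. f m \<gamma> - f n \<gamma>) + rnorm G (\<lambda>\<gamma>. f m \<gamma> - f n \<gamma>))"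
    proof -
      have "cmod (f m undefined - f n undefined) \<le> rnorm G (\<lambda>\<gamma>. f m \<gamma> - f n \<gamma>)"
        by (rule diff_le_rnorm[OF bl f(1)[rule_format] f(1)[rule_format]])
      hence "0 \<le> rnorm G (\<lambda>\<gamma>. f m \<gamma> - f n \<gamma>)" by (meson norm_ge_zero order_trans)
      thus ?thesis using B0 by (intro mult_left_mono) auto
    qed
    finally show "rnorm G (\<lambda>\<gamma>. g m \<gamma> - g n \<gamma>) \<le> B * (rnorm G (\<lambda>\<gamma>. f m \<gamma> - f n \<gamma>) + rnorm G (\<lambda>\<gamma>. f m \<gamma> - f n \<gamma>))" .
  qed
  moreover have "\<forall>\<gamma>. (\<lambda>n. g n \<gamma>) \<longlonglongrightarrow> q \<gamma> * a \<gamma>"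
    unfolding g_def using f(3) by (auto intro: tendsto_mult_left)
  ultimately show ?thesis using gCc by (intro C0_onI[of g]) auto
qed

lemma closure_i_image: "closure (i ` S) \<subseteq> i ` closure S"
proof -
  have "i ` closure S = i -` closure S" by (rule i_image)
  moreover have "closed (i -` closure S)"
  proof -
    have "\<forall>x. isCont i x" using cont_i continuous_on_eq_continuous_at[of UNIV i] by simp
    thus ?thesis by (intro continuous_closed_vimage[OF closed_closure]) simp
  qed
  moreover have "i ` S \<subseteq> i ` closure S" using closure_subset by (rule image_mono)
  ultimately show ?thesis by (metis closure_minimal)
qed

lemma C0_invol:
  assumes U: "U \<in> open_bisections G" and a: "a \<in> C0_on G U"
  shows "invol G a \<in> C0_on G (i ` U)"
proof -
  obtain f where f: "\<forall>n. f n \<in> Cc_on U" "rcauchy G f" "\<forall>\<gamma>. (\<lambda>n. f n \<gamma>) \<longlonglongrightarrow> a \<gamma>"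
    using a by (rule C0_onE)
  have bl: "bislike G U" by (rule bislike_ob[OF U])
  have bl': "bislike G (i ` U)" by (rule bislike_ob[OF inv_bis[OF U]])
  define g where "g n = invol G (f n)" for n
  have gCc: "g n \<in> Cc_on (i ` U)" for n
  proof -
    have fn: "continuous_on UNIV (f n)" "compact (closure {x. f n x \<noteq> 0})" "closure {x. f n x \<noteq> 0} \<subseteq> U"
      using f(1) by (simp_all add: Cc_on_def)
    have s: "{x. g n x \<noteq> 0} = i ` {x. f n x \<noteq> 0}"
      by (auto simp: g_def invol_def image_iff) (metis ii)
    have cl: "closure {x. g n x \<noteq> 0} \<subseteq> i ` closure {x. f n x \<noteq> 0}"
      unfolding s by (rule closure_i_image)
    have "continuous_on UNIV (g n)" unfolding g_def invol_def
      by (intro continuous_intros continuous_on_compose2[OF fn(1) cont_i]) auto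
    moreover have "closure {x. g n x \<noteq> 0} \<subseteq> i ` U" using cl fn(3) by blast
    moreover have "compact (closure {x. g n x \<noteq> 0})"
    proof -
      have ck: "compact (i ` closure {x. f n x \<noteq> 0})"
        by (rule compact_continuous_image[OF continuous_on_subset[OF cont_i] fn(2)]) simp
      have "closure {x. g n x \<noteq> 0} = i ` closure {x. f n x \<noteq> 0} \<inter> closure {x. g n x \<noteq> 0}" using cl by blast
      thus ?thesis using compact_Int_closed[OF ck closed_closure] by metis
    qed
    ultimately show ?thesis by (simp add: Cc_on_def)
  qed
  have "rcauchy G g"
  proof (rule rcauchy_transfer[OF f(2) f(2), where K=1])
    fix m n
    have "rnorm G (\<lambda>\<gamma>. g m \<gamma> - g n \<gamma>) \<le> rnorm G (\<lambda>\<gamma>. f m \<gamma> - f n \<gamma>)"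
    proof (rule rnorm_le(1)[where W="i ` U"])
      show "\<And>\<gamma>. \<gamma> \<notin> i ` U \<Longrightarrow> g m \<gamma> - g n \<gamma> = 0"
      proof -
        fix \<gamma> assume "\<gamma> \<notin> i ` U"
        hence "i \<gamma> \<notin> U" by (metis ii image_eqI)
        thus "g m \<gamma> - g n \<gamma> = 0"
          using Cc_vanish[OF f(1)[rule_format, of m]] Cc_vanish[OF f(1)[rule_format, of n]]
          by (simp add: g_def invol_def)
      qed
      show "inj_on d (i ` U)" "inj_on r (i ` U)" using bl' by (auto simp: bislike_def)
      fix \<gamma>
      have "cmod (g m \<gamma> - g n \<gamma>) = cmod (f m (i \<gamma>) - f n (i \<gamma>))"
        by (simp add: g_def invol_def flip: complex_cnj_diff)
      also have "\<dots> \<le> rnorm G (\<lambda>\<gamma>. f m \<gamma> - f n \<gamma>)"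
        by (rule diff_le_rnorm[OF bl f(1)[rule_format] f(1)[rule_format]])
      finally show "cmod (g m \<gamma> - g n \<gamma>) \<le> rnorm G (\<lambda>\<gamma>. f m \<gamma> - f n \<gamma>)" .
    qed
    also have "\<dots> \<le> 1 * (rnorm G (\<lambda>\<gamma>. f m \<gamma> - f n \<gamma>) + rnorm G (\<lambda>\<gamma>. f m \<gamma> - f n \<gamma>))"
    proof -
      have "cmod (f m undefined - f n undefined) \<le> rnorm G (\<lambda>\<gamma>. f m \<gamma> - f n \<gamma>)"
        by (rule diff_le_rnorm[OF bl f(1)[rule_format] f(1)[rule_format]])
      hence "0 \<le> rnorm G (\<lambda>\<gamma>. f m \<gamma> - f n \<gamma>)" by (meson norm_ge_zero order_trans)
      thus ?thesis by simp
    qed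
    finally show "rnorm G (\<lambda>\<gamma>. g m \<gamma> - g n \<gamma>) \<le> 1 * (rnorm G (\<lambda>\<gamma>. f m \<gamma> - f n \<gamma>) + rnorm G (\<lambda>\<gamma>. f m \<gamma> - f n \<gamma>))" .
  qed simp
  moreover have "\<forall>\<gamma>. (\<lambda>n. g n \<gamma>) \<longlonglongrightarrow> invol G a \<gamma>"
    unfolding g_def invol_def using f(3) by (auto intro: tendsto_cnj)
  ultimately show ?thesis using gCc by (intro C0_onI[of g]) auto
qed

end

context etale begin

lemma homeo_props:
  assumes "homeomorphism W (d ` W) d s"
  shows "\<And>x. x \<in> W \<Longrightarrow> s (d x) = x" "\<And>y. y \<in> d ` W \<Longrightarrow> s y \<in> W"
    "\<And>y. y \<in> d ` W \<Longrightarrow> d (s y) = y" "continuous_on (d ` W) s"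
  using assms unfolding homeomorphism_def by auto

lemma prod_setup:
  assumes U: "U \<in> open_bisections G" and W: "W \<in> open_bisections G"
    and s: "homeomorphism W (d ` W) d s"
  defines "D0 \<equiv> d -` (d ` W)" and "\<phi> \<equiv> (\<lambda>\<gamma>. m \<gamma> (i (s (d \<gamma>))))"
  shows "open D0" "continuous_on D0 \<phi>" "bis_prod G U W = D0 \<inter> \<phi> -` U"
proof -
  note sp = homeo_props[OF s]
  have oW: "open W" using W by (simp add: open_bisections_def)
  have "open (d ` W)" by (rule open_d_image[OF oW])
  thus oD: "open D0" unfolding D0_def using open_vimage cont_d by blast
  have c1: "continuous_on D0 (\<lambda>\<gamma>. i (s (d \<gamma>)))"
  proof -
    have "continuous_on D0 d" using cont_d continuous_on_subset by blast
    moreover have "d ` D0 \<subseteq> d ` W" by (auto simp: D0_def)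
    ultimately have "continuous_on D0 (s \<circ> d)" using continuous_on_compose continuous_on_subset sp(4) by blast
    hence "continuous_on D0 (i \<circ> (s \<circ> d))"
      using continuous_on_compose continuous_on_subset cont_i by blast
    thus ?thesis by (simp add: o_def)
  qed
  have c2: "continuous_on D0 (\<lambda>\<gamma>. (\<gamma>, i (s (d \<gamma>))))" by (intro continuous_on_Pair continuous_on_id c1)
  have im: "(\<lambda>\<gamma>. (\<gamma>, i (s (d \<gamma>)))) ` D0 \<subseteq> {(a, b). d a = r b}"
    using sp by (auto simp: D0_def)
  have "continuous_on D0 ((\<lambda>(a, b). m a b) \<circ> (\<lambda>\<gamma>. (\<gamma>, i (s (d \<gamma>)))))"
    by (rule continuous_on_compose[OF c2]) (rule continuous_on_subset[OF cont_m im])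
  thus "continuous_on D0 \<phi>" by (simp add: o_def \<phi>_def)
  show "bis_prod G U W = D0 \<inter> \<phi> -` U"
  proof
    show "bis_prod G U W \<subseteq> D0 \<inter> \<phi> -` U"
    proof
      fix \<gamma> assume "\<gamma> \<in> bis_prod G U W"
      then obtain a b where ab: "a \<in> U" "b \<in> W" "d a = r b" "\<gamma> = m a b"
        unfolding bis_prod_def by blast
      have dg: "d \<gamma> = d b" using ab by simp
      hence sb: "s (d \<gamma>) = b" using sp(1) ab by simp
      have "\<phi> \<gamma> = m \<gamma> (i b)" unfolding \<phi>_def sb ..
      also have "\<dots> = m (m a b) (i b)" by (simp only: ab(4))
      also have "\<dots> = m a (m b (i b))" using ab(3) by (intro assoc) auto
      also have "\<dots> = a" using ab(3) by (simp flip: ab(3))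
      finally show "\<gamma> \<in> D0 \<inter> \<phi> -` U" using ab dg by (auto simp: D0_def)
    qed
    show "D0 \<inter> \<phi> -` U \<subseteq> bis_prod G U W"
    proof
      fix \<gamma> assume g: "\<gamma> \<in> D0 \<inter> \<phi> -` U"
      define b where "b = s (d \<gamma>)"
      have b: "b \<in> W" "d b = d \<gamma>" using g sp by (auto simp: D0_def b_def)
      have ca: "d \<gamma> = r (i b)" using b by simp
      have pe: "\<phi> \<gamma> = m \<gamma> (i b)" unfolding \<phi>_def b_def ..
      have comp: "d (\<phi> \<gamma>) = r b" unfolding pe using d_m[OF ca] by simp
      have "m (\<phi> \<gamma>) b = m (m \<gamma> (i b)) b" by (simp add: \<phi>_def b_def)
      also have "\<dots> = m \<gamma> (m (i b) b)" using ca by (intro assoc) auto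
      also have "\<dots> = \<gamma>" using b by simp
      finally show "\<gamma> \<in> bis_prod G U W" unfolding bis_prod_def using g b comp by force
    qed
  qed
qed

lemma bis_prod_bis:
  assumes U: "U \<in> open_bisections G" and W: "W \<in> open_bisections G"
  shows "bis_prod G U W \<in> open_bisections G"
proof -
  have oW: "open W" "inj_on d W" using W by (auto simp: open_bisections_def)
  obtain s where s: "homeomorphism W (d ` W) d s" using bis_homeo[OF oW] by blast
  note ps = prod_setup[OF U W s]
  have oU: "open U" using U by (simp add: open_bisections_def)
  have "open ((\<lambda>\<gamma>. m \<gamma> (i (s (d \<gamma>)))) -` U \<inter> d -` d ` W)"
    using ps(2) continuous_on_open_vimage[OF ps(1)] oU by blast
  hence op: "open (bis_prod G U W)" unfolding ps(3) by (simp add: Int_commute)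
  have iU: "inj_on d U" "inj_on r U" "inj_on d W" "inj_on r W" using U W by (auto simp: open_bisections_def)
  have "inj_on d (bis_prod G U W)"
  proof (rule inj_onI)
    fix x y assume "x \<in> bis_prod G U W" "y \<in> bis_prod G U W" "d x = d y"
    then obtain a b a' b' where h: "a \<in> U" "b \<in> W" "d a = r b" "x = m a b"
      "a' \<in> U" "b' \<in> W" "d a' = r b'" "y = m a' b'" "d x = d y" unfolding bis_prod_def by blast
    have "d b = d b'" using h by simp
    hence bb: "b = b'" using iU(3) h unfolding inj_on_def by blast
    hence "d a = d a'" using h by simp
    hence "a = a'" using iU(1) h unfolding inj_on_def by blast
    thus "x = y" using bb h by simp
  qed
  moreover have "inj_on r (bis_prod G U W)"
  proof (rule inj_onI)
    fix x y assume "x \<in> bis_prod G U W" "y \<in> bis_prod G U W" "r x = r y"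
    then obtain a b a' b' where h: "a \<in> U" "b \<in> W" "d a = r b" "x = m a b"
      "a' \<in> U" "b' \<in> W" "d a' = r b'" "y = m a' b'" "r x = r y" unfolding bis_prod_def by blast
    have "r a = r a'" using h by simp
    hence aa: "a = a'" using iU(2) h unfolding inj_on_def by blast
    hence "r b = r b'" using h by simp
    hence "b = b'" using iU(4) h unfolding inj_on_def by blast
    thus "x = y" using aa h by simp
  qed
  ultimately show ?thesis using op by (simp add: open_bisections_def)
qed

lemma conv_formula:
  assumes W: "W \<in> open_bisections G" and s: "homeomorphism W (d ` W) d s"
    and b0: "\<And>x. x \<notin> W \<Longrightarrow> b x = 0"
  shows "conv G a b \<gamma> = (if \<gamma> \<in> d -` d ` W then a (m \<gamma> (i (s (d \<gamma>)))) * b (s (d \<gamma>)) else 0)"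
proof -
  note sp = homeo_props[OF s]
  have iW: "inj_on d W" using W by (simp add: open_bisections_def)
  show ?thesis
  proof (cases "\<gamma> \<in> d -` d ` W")
    case True
    hence "s (d \<gamma>) \<in> W" "d (s (d \<gamma>)) = d \<gamma>" using sp by auto
    thus ?thesis using True conv_bis[of W b, OF b0 iW] by simp
  next
    case False
    hence "\<not> (\<exists>\<beta>\<in>W. d \<beta> = d \<gamma>)" by (metis image_eqI vimageI)
    thus ?thesis using False conv_bis_none[of W b, OF b0] by simp
  qed
qed

lemma continuous_on_zero_outside:
  assumes "open D" "continuous_on D f" "closed K" "K \<subseteq> D" "\<And>x. x \<notin> K \<Longrightarrow> f x = 0"
  shows "continuous_on UNIV f"
proof -
  have "continuous_on (- K) f"
    using continuous_on_const[of "- K" 0] by (rule continuous_on_cong[THEN iffD1, rotated 2]) (use assms in auto)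
  hence "continuous_on (D \<union> - K) f" using assms by (intro continuous_on_open_Un) auto
  moreover have "D \<union> - K = UNIV" using assms by auto
  ultimately show ?thesis by simp
qed

lemma conv_C0:
  assumes U: "U \<in> open_bisections G" and W: "W \<in> open_bisections G"
    and a: "a \<in> C0_on G U" and b: "b \<in> C0_on G W"
  shows "conv G a b \<in> C0_on G (bis_prod G U W)"
proof -
  have oW: "open W" "inj_on d W" using W by (auto simp: open_bisections_def)
  obtain s where s: "homeomorphism W (d ` W) d s" using bis_homeo[OF oW] by blast
  note sp = homeo_props[OF s]
  define D0 where "D0 = d -` d ` W"
  define \<phi> where "\<phi> = (\<lambda>\<gamma>. m \<gamma> (i (s (d \<gamma>))))"
  note ps = prod_setup[OF U W s, folded D0_def \<phi>_def]
  have blU: "bislike G U" and blW: "bislike G W" using U W by (simp_all add: bislike_ob)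
  have blP: "bislike G (bis_prod G U W)" using bis_prod_bis[OF U W] by (simp add: bislike_ob)
  obtain f where f: "\<forall>n. f n \<in> Cc_on U" "rcauchy G f" "\<forall>\<gamma>. (\<lambda>n. f n \<gamma>) \<longlonglongrightarrow> a \<gamma>"
    using a by (rule C0_onE)
  obtain g where g: "\<forall>n. g n \<in> Cc_on W" "rcauchy G g" "\<forall>\<gamma>. (\<lambda>n. g n \<gamma>) \<longlonglongrightarrow> b \<gamma>"
    using b by (rule C0_onE)
  have cs: "conv G a' b' \<gamma> = (if \<gamma> \<in> D0 then a' (\<phi> \<gamma>) * b' (s (d \<gamma>)) else 0)"
    if "\<And>x. x \<notin> W \<Longrightarrow> b' x = 0" for a' b' \<gamma>
    unfolding D0_def \<phi>_def by (rule conv_formula[OF W s that])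
  define c where "c n = conv G (f n) (g n)" for n
  have cf: "c n \<gamma> = (if \<gamma> \<in> D0 then f n (\<phi> \<gamma>) * g n (s (d \<gamma>)) else 0)" for n \<gamma>
    unfolding c_def by (rule cs) (rule Cc_vanish[OF g(1)[rule_format]])
  have cCc: "c n \<in> Cc_on (bis_prod G U W)" for n
  proof -
    have fn: "continuous_on UNIV (f n)" "compact (closure {x. f n x \<noteq> 0})" "closure {x. f n x \<noteq> 0} \<subseteq> U"
      using f(1) by (simp_all add: Cc_on_def)
    have gn: "continuous_on UNIV (g n)" "compact (closure {x. g n x \<noteq> 0})" "closure {x. g n x \<noteq> 0} \<subseteq> W"
      using g(1) by (simp_all add: Cc_on_def)
    define P where "P = (closure {x. f n x \<noteq> 0} \<times> closure {x. g n x \<noteq> 0}) \<inter> {(x, y). d x = r y}"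
    have cl: "closed {(x, y). d x = r y}"
    proof -
      have c1: "continuous_on UNIV (\<lambda>p. d (fst p))" "continuous_on UNIV (\<lambda>p. r (snd p))"
        by (intro continuous_on_compose2[OF cont_d] continuous_on_compose2[OF cont_r] continuous_intros; simp)+
      have "closed {p. d (fst p) = r (snd p)}" by (rule closed_Collect_eq[OF c1])
      moreover have "{(x, y). d x = r y} = {p. d (fst p) = r (snd p)}" by auto
      ultimately show ?thesis by simp
    qed
    have cP: "compact P" unfolding P_def by (intro compact_Int_closed compact_Times fn(2) gn(2) cl)
    define Kp where "Kp = (\<lambda>(x, y). m x y) ` P"
    have cKp: "compact Kp" unfolding Kp_def
      by (rule compact_continuous_image[OF continuous_on_subset[OF cont_m] cP]) (auto simp: P_def)
    hence clKp: "closed Kp" by (rule compact_imp_closed)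
    have KpP: "Kp \<subseteq> bis_prod G U W"
    proof
      fix z assume "z \<in> Kp"
      then obtain x y where xy: "(x, y) \<in> P" "z = m x y" unfolding Kp_def by auto
      hence "x \<in> U" "y \<in> W" "d x = r y" unfolding P_def using fn(3) gn(3) by auto
      thus "z \<in> bis_prod G U W" unfolding bis_prod_def using xy(2) by blast
    qed
    have KpD: "Kp \<subseteq> D0" using KpP ps(3) by blast
    have supp: "{x. c n x \<noteq> 0} \<subseteq> Kp"
    proof
      fix \<gamma> assume "\<gamma> \<in> {x. c n x \<noteq> 0}"
      hence h: "\<gamma> \<in> D0" "f n (\<phi> \<gamma>) \<noteq> 0" "g n (s (d \<gamma>)) \<noteq> 0" using cf[of n \<gamma>] by (auto split: if_splits)
      define bb where "bb = s (d \<gamma>)"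
      have bb: "bb \<in> W" "d bb = d \<gamma>" using h(1) sp by (auto simp: D0_def bb_def)
      have ca: "d \<gamma> = r (i bb)" using bb by simp
      have pe: "\<phi> \<gamma> = m \<gamma> (i bb)" unfolding \<phi>_def bb_def ..
      have comp: "d (\<phi> \<gamma>) = r bb" unfolding pe using d_m[OF ca] by simp
      have "m (\<phi> \<gamma>) bb = m (m \<gamma> (i bb)) bb" by (simp only: pe)
      also have "\<dots> = m \<gamma> (m (i bb) bb)" using ca by (intro assoc) auto
      also have "\<dots> = \<gamma>" using bb by simp
      finally have eq: "m (\<phi> \<gamma>) bb = \<gamma>" .
      have "\<phi> \<gamma> \<in> closure {x. f n x \<noteq> 0}" using h(2) closure_subset[of "{x. f n x \<noteq> 0}"] by blast
      moreover have "bb \<in> closure {x. g n x \<noteq> 0}" using h(3) closure_subset[of "{x. g n x \<noteq> 0}"] by (auto simp: bb_def)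
      ultimately have "(\<phi> \<gamma>, bb) \<in> P" unfolding P_def using comp by auto
      thus "\<gamma> \<in> Kp" unfolding Kp_def using eq by force
    qed
    have clsub: "closure {x. c n x \<noteq> 0} \<subseteq> Kp" by (rule closure_minimal[OF supp clKp])
    have "continuous_on D0 (\<lambda>\<gamma>. f n (\<phi> \<gamma>) * g n (s (d \<gamma>)))"
    proof (intro continuous_on_mult)
      show "continuous_on D0 (\<lambda>\<gamma>. f n (\<phi> \<gamma>))"
        by (rule continuous_on_compose2[OF fn(1) ps(2)]) simp
      have "continuous_on D0 (s \<circ> d)"
        by (rule continuous_on_compose[OF continuous_on_subset[OF cont_d] continuous_on_subset[OF sp(4)]])
          (auto simp: D0_def)
      thus "continuous_on D0 (\<lambda>\<gamma>. g n (s (d \<gamma>)))"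
        using continuous_on_compose2[OF gn(1), of D0 "s \<circ> d"] by (simp add: o_def)
    qed
    hence "continuous_on D0 (c n)" by (rule continuous_on_cong[THEN iffD1, rotated 2]) (auto simp: cf)
    hence "continuous_on UNIV (c n)"
      by (rule continuous_on_zero_outside[OF ps(1) _ clKp KpD]) (use supp in auto)
    moreover have "compact (closure {x. c n x \<noteq> 0})"
    proof -
      have "closure {x. c n x \<noteq> 0} = Kp \<inter> closure {x. c n x \<noteq> 0}" using clsub by blast
      thus ?thesis using compact_Int_closed[OF cKp closed_closure] by metis
    qed
    ultimately show ?thesis using clsub KpP by (simp add: Cc_on_def)
  qed
  obtain Bf where Bf: "\<forall>n x. cmod (f n x) \<le> Bf" using rcauchy_unif_bound[OF blU f(1,2)] by blast
  obtain Bg where Bg: "\<forall>n x. cmod (g n x) \<le> Bg" using rcauchy_unif_bound[OF blW g(1,2)] by blast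
  define K where "K = max Bf Bg"
  have K0: "0 \<le> K" using Bf norm_ge_zero order_trans unfolding K_def by (meson max.coboundedI1)
  have "rcauchy G c"
  proof (rule rcauchy_transfer[OF f(2) g(2) K0])
    fix p q
    let ?rf = "rnorm G (\<lambda>\<gamma>. f p \<gamma> - f q \<gamma>)" and ?rg = "rnorm G (\<lambda>\<gamma>. g p \<gamma> - g q \<gamma>)"
    have rf: "cmod (f p x - f q x) \<le> ?rf" for x by (rule diff_le_rnorm[OF blU f(1)[rule_format] f(1)[rule_format]])
    have rg: "cmod (g p x - g q x) \<le> ?rg" for x by (rule diff_le_rnorm[OF blW g(1)[rule_format] g(1)[rule_format]])
    have rf0: "0 \<le> ?rf" using rf[of undefined] by (meson norm_ge_zero order_trans)
    have rg0: "0 \<le> ?rg" using rg[of undefined] by (meson norm_ge_zero order_trans)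
    show "rnorm G (\<lambda>\<gamma>. c p \<gamma> - c q \<gamma>) \<le> K * (?rf + ?rg)"
    proof (rule rnorm_le(1)[where W="bis_prod G U W"])
      show "\<And>\<gamma>. \<gamma> \<notin> bis_prod G U W \<Longrightarrow> c p \<gamma> - c q \<gamma> = 0"
        using Cc_vanish[OF cCc] by simp
      show "inj_on d (bis_prod G U W)" "inj_on r (bis_prod G U W)" using blP by (auto simp: bislike_def)
      fix \<gamma>
      show "cmod (c p \<gamma> - c q \<gamma>) \<le> K * (?rf + ?rg)"
      proof (cases "\<gamma> \<in> D0")
        case True
        let ?x = "\<phi> \<gamma>" and ?y = "s (d \<gamma>)"
        have "c p \<gamma> - c q \<gamma> = (f p ?x - f q ?x) * g p ?y + f q ?x * (g p ?y - g q ?y)"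
          using True by (simp add: cf algebra_simps)
        hence "cmod (c p \<gamma> - c q \<gamma>) \<le> cmod (f p ?x - f q ?x) * cmod (g p ?y) + cmod (f q ?x) * cmod (g p ?y - g q ?y)"
          by (metis norm_mult norm_triangle_ineq)
        also have "\<dots> \<le> ?rf * K + K * ?rg"
          by (intro add_mono mult_mono rf rg rf0 norm_ge_zero order_trans[OF Bg[rule_format]]
              order_trans[OF Bf[rule_format]] K0) (auto simp: K_def)
        finally show ?thesis by (simp add: algebra_simps)
      next
        case False
        thus ?thesis using K0 rf0 rg0 by (simp add: cf)
      qed
    qed
  qed
  moreover have "(\<lambda>n. c n \<gamma>) \<longlonglongrightarrow> conv G a b \<gamma>" for \<gamma>
  proof -
    have "conv G a b \<gamma> = (if \<gamma> \<in> D0 then a (\<phi> \<gamma>) * b (s (d \<gamma>)) else 0)"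
      by (rule cs) (rule C0_vanish[OF b])
    thus ?thesis unfolding cf using f(3) g(3) by (auto intro: tendsto_mult)
  qed
  ultimately show ?thesis using cCc by (intro C0_onI[of c]) auto
qed

end

theorem mainTheorem7:
  fixes G :: "('g::t2_space) groupoid" and H :: "('h::t2_space) groupoid"
    and \<phi> :: "('g \<Rightarrow> complex) \<Rightarrow> ('h \<Rightarrow> complex)"
    and F :: "'g set" and \<psi> :: "'g set \<Rightarrow> 'h set"
    and \<sigma> :: "'g \<Rightarrow> 'h" and V :: "'h set" and \<Phi> :: "'g \<Rightarrow> 'h"
  assumes G_etale: "etale_groupoid G"
    and H_etale: "etale_groupoid H"
    and H_eff: "effective H"
    and phi_hom: "star_hom G H \<phi>"
    and phi_units: "\<phi> ` C0_on G (units G) \<subseteq> C0_on H (units H)"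
    and phi_ideal: "\<forall>a\<in>\<phi> ` C0_on G (units G). \<forall>b\<in>C0_on H (units H).
                      conv H b a \<in> \<phi> ` C0_on G (units G) \<and> conv H a b \<in> \<phi> ` C0_on G (units G)"
    and F_sub: "F \<subseteq> units G"
    and F_closed: "closedin (top_of_set (units G)) F"
    and F_inv: "\<forall>\<gamma>. gsrc G \<gamma> \<in> F \<longleftrightarrow> grng G \<gamma> \<in> F"
    and F_ker: "{a \<in> C0_on G (units G). \<phi> a = (\<lambda>_. 0)} = C0_on G (units G - F)"
    and psi_bis: "\<forall>U\<in>open_bisections G. \<psi> U \<in> open_bisections H \<and> \<phi> ` C0_on G U = C0_on H (\<psi> U)"
    and psi_mult: "\<forall>U\<in>open_bisections G. \<forall>W\<in>open_bisections G.
                     \<psi> (bis_prod G U W) = bis_prod H (\<psi> U) (\<psi> W)"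
    and V_open: "open V" and V_sub: "V \<subseteq> units H"
    and sigma_homeo: "\<exists>\<sigma>'. homeomorphism F V \<sigma> \<sigma>'"
    and V_image: "\<phi> ` C0_on G (units G) = C0_on H V"
    and sigma_eval: "\<forall>f\<in>C0_on G (units G). \<forall>x\<in>F. \<phi> f (\<sigma> x) = f x"
    and Phi_def: "\<forall>\<alpha>. gsrc G \<alpha> \<in> F \<longrightarrow> (\<forall>U\<in>open_bisections G. \<alpha> \<in> U \<longrightarrow>
                    \<Phi> \<alpha> \<in> \<psi> U \<and> gsrc H (\<Phi> \<alpha>) = \<sigma> (gsrc G \<alpha>))"
  shows "\<exists>c :: 'g \<Rightarrow> complex.
           (\<forall>\<alpha>\<in>{\<alpha>. gsrc G \<alpha> \<in> F}. cmod (c \<alpha>) = 1 \<and>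
              (\<forall>U n. U \<in> open_bisections G \<and> \<alpha> \<in> U \<and> n \<in> C0_on G U \<and> n \<alpha> \<noteq> 0 \<longrightarrow>
                     c \<alpha> = \<phi> n (\<Phi> \<alpha>) / n \<alpha>)) \<and>
           continuous_on {\<alpha>. gsrc G \<alpha> \<in> F} c \<and>
           (\<forall>\<alpha> \<beta>. gsrc G \<alpha> \<in> F \<and> gsrc G \<beta> \<in> F \<and> gsrc G \<alpha> = grng G \<beta> \<longrightarrow>
              c (gmul G \<alpha> \<beta>) = c \<alpha> * c \<beta>)"
proof -
  interpret g: etale G
    by unfold_locales (use G_etale in \<open>auto simp: etale_groupoid_def\<close>)
  interpret h: etale H
    by unfold_locales (use H_etale in \<open>auto simp: etale_groupoid_def\<close>)
  have CrG: "a \<in> Cr G" if "a \<in> C0_on G U" for a U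
    using g.C0_mono[of U UNIV] that by (auto simp: Cr_def)
  have hom_conv: "\<phi> (conv G a b) = conv H (\<phi> a) (\<phi> b)" if "a \<in> Cr G" "b \<in> Cr G" for a b
    using phi_hom that unfolding star_hom_def by blast
  have hom_invol: "\<phi> (invol G a) = invol H (\<phi> a)" if "a \<in> Cr G" for a
    using phi_hom that unfolding star_hom_def by blast
  obtain \<sigma>' where sh: "homeomorphism F V \<sigma> \<sigma>'" using sigma_homeo by blast
  have sigV: "\<sigma> x \<in> V" if "x \<in> F" for x using sh that unfolding homeomorphism_def by blast
  have psiOB: "\<psi> U \<in> open_bisections H" if "U \<in> open_bisections G" for U
    using psi_bis that by blast
  have phiC0: "\<phi> n \<in> C0_on H (\<psi> U)" if "U \<in> open_bisections G" "n \<in> C0_on G U" for U n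
    using psi_bis that by blast
  have PhiU: "\<Phi> \<alpha> \<in> \<psi> U" "gsrc H (\<Phi> \<alpha>) = \<sigma> (gsrc G \<alpha>)"
    if "gsrc G \<alpha> \<in> F" "U \<in> open_bisections G" "\<alpha> \<in> U" for \<alpha> U
    using Phi_def that by blast+
  have bumpG: "\<exists>f. f \<in> Cc_on A \<and> f p = 1 \<and> (\<forall>x. cmod (f x) \<le> 1)" if "open (A::'g set)" "p \<in> A" for A p
    by (rule bump_exists[OF g.lc that])
  have fCr: "\<phi> f \<in> C0_on H V" if "f \<in> C0_on G (units G)" for f
    using V_image that by blast
  have K: "cnj (\<phi> m (\<Phi> \<alpha>)) * \<phi> n (\<Phi> \<alpha>) = cnj (m \<alpha>) * n \<alpha>"
    if aF: "gsrc G \<alpha> \<in> F" and U: "U \<in> open_bisections G" and W: "W \<in> open_bisections G"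
      and aU: "\<alpha> \<in> U" and aW: "\<alpha> \<in> W" and n: "n \<in> C0_on G U" and m: "m \<in> C0_on G W"
    for \<alpha> U W n m
  proof -
    define Ob where "Ob = U \<inter> W"
    have oOb: "open Ob" using U W by (auto simp: open_bisections_def Ob_def)
    have iUd: "inj_on (gsrc G) U" "inj_on (grng G) U" using U by (auto simp: open_bisections_def)
    have iWd: "inj_on (gsrc G) W" using W by (auto simp: open_bisections_def)
    define A where "A = gsrc G ` Ob"
    have oA: "open A" unfolding A_def by (rule g.open_d_image[OF oOb])
    have aA: "gsrc G \<alpha> \<in> A" using aU aW by (auto simp: A_def Ob_def)
    obtain f where f: "f \<in> Cc_on A" "f (gsrc G \<alpha>) = 1" "\<forall>x. cmod (f x) \<le> 1"
      using bumpG[OF oA aA] by blast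
    have Au: "A \<subseteq> units G" by (auto simp: A_def)
    have fU: "f \<in> C0_on G (units G)" by (rule g.Cc_C0[OF Cc_mono[OF f(1) Au]])
    have fvan: "f x = 0" if "x \<notin> units G" for x using Cc_vanish[OF f(1)] that Au by blast
    have fcont: "continuous_on UNIV f" using f(1) by (simp add: Cc_on_def)
    have iW: "ginv G ` W \<in> open_bisections G" by (rule g.inv_bis[OF W])
    have mi: "invol G m \<in> C0_on G (ginv G ` W)" by (rule g.C0_invol[OF W m])
    define P where "P = bis_prod G (ginv G ` W) U"
    define k where "k = conv G (invol G m) n"
    have kC: "k \<in> C0_on G P" unfolding k_def P_def by (rule g.conv_C0[OF iW U mi n])
    have POB: "P \<in> open_bisections G" unfolding P_def by (rule g.bis_prod_bis[OF iW U])
    have k'eq: "conv G f k = (\<lambda>\<gamma>. f (grng G \<gamma>) * k \<gamma>)"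
      by (rule ext) (rule g.conv_left_unit[OF fvan])
    have sub: "P \<inter> closure {\<gamma>. f (grng G \<gamma>) \<noteq> 0} \<subseteq> units G"
    proof
      fix \<gamma> assume g: "\<gamma> \<in> P \<inter> closure {\<gamma>. f (grng G \<gamma>) \<noteq> 0}"
      have cl: "closed (grng G -` closure {x. f x \<noteq> 0})"
      proof -
        have "\<forall>x. isCont (grng G) x" using g.cont_r continuous_on_eq_continuous_at[of UNIV "grng G"] by simp
        thus ?thesis by (intro continuous_closed_vimage[OF closed_closure]) simp
      qed
      have "{\<gamma>. f (grng G \<gamma>) \<noteq> 0} \<subseteq> grng G -` closure {x. f x \<noteq> 0}"
        using closure_subset[of "{x. f x \<noteq> 0}"] by auto
      hence "closure {\<gamma>. f (grng G \<gamma>) \<noteq> 0} \<subseteq> grng G -` closure {x. f x \<noteq> 0}"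
        by (rule closure_minimal[OF _ cl])
      moreover have "closure {x. f x \<noteq> 0} \<subseteq> A" using f(1) by (simp add: Cc_on_def)
      ultimately have rA: "grng G \<gamma> \<in> A" using g by blast
      obtain w u where wu: "w \<in> W" "u \<in> U" "gsrc G (ginv G w) = grng G u" "\<gamma> = gmul G (ginv G w) u"
        using g unfolding P_def bis_prod_def by blast
      have "grng G \<gamma> = gsrc G w" using wu by simp
      then obtain ob where o: "ob \<in> Ob" "gsrc G ob = gsrc G w" using rA unfolding A_def by auto
      have "ob = w" using iWd o wu(1) unfolding inj_on_def Ob_def by blast
      hence wU: "w \<in> U" using o by (simp add: Ob_def)
      have "grng G w = grng G u" using wu(3) by simp
      hence "w = u" using iUd(2) wU wu(2) unfolding inj_on_def by blast
      hence "\<gamma> = gsrc G w" using wu(4) by simp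
      thus "\<gamma> \<in> units G" by simp
    qed
    have qc: "continuous_on UNIV (\<lambda>\<gamma>. f (grng G \<gamma>))"
      by (rule continuous_on_compose2[OF fcont g.cont_r]) simp
    have k'U: "(\<lambda>\<gamma>. f (grng G \<gamma>) * k \<gamma>) \<in> C0_on G (units G)"
      by (rule g.C0_mult[OF bislike_ob[OF POB] kC qc _ sub, where B=1]) (use f(3) in simp)
    have k'C: "conv G f k \<in> C0_on G (units G)" using k'U k'eq by simp
    have e1: "\<phi> (conv G f k) (\<sigma> (gsrc G \<alpha>)) = conv G f k (gsrc G \<alpha>)"
      using sigma_eval[rule_format, OF k'C aF] .
    have nvan: "\<And>x. x \<notin> U \<Longrightarrow> n x = 0" using g.C0_vanish[OF n] by blast
    have e2: "conv G f k (gsrc G \<alpha>) = cnj (m \<alpha>) * n \<alpha>"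
    proof -
      have "k (gsrc G \<alpha>) = cnj (m \<alpha>) * n \<alpha>"
        unfolding k_def by (rule g.conv_invol_unit[where B=U and b=n, OF nvan iUd(1) aU refl])
      thus ?thesis using k'eq f(2) by simp
    qed
    define y where "y = \<sigma> (gsrc G \<alpha>)"
    have yV: "y \<in> V" unfolding y_def by (rule sigV[OF aF])
    have yu: "y \<in> units H" using yV V_sub by blast
    have fCrG: "f \<in> Cr G" by (rule CrG[OF fU])
    have kCr: "k \<in> Cr G" by (rule CrG[OF kC])
    have miCr: "invol G m \<in> Cr G" by (rule CrG[OF mi])
    have mCr: "m \<in> Cr G" by (rule CrG[OF m])
    have nCr: "n \<in> Cr G" by (rule CrG[OF n])
    have phik: "\<phi> k = conv H (invol H (\<phi> m)) (\<phi> n)"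
      unfolding k_def using hom_conv[OF miCr nCr] hom_invol[OF mCr] by simp
    have phifvan: "\<And>x. x \<notin> units H \<Longrightarrow> \<phi> f x = 0"
      using h.C0_vanish[OF fCr[OF fU]] V_sub by blast
    have "\<phi> (conv G f k) y = conv H (\<phi> f) (\<phi> k) y" using hom_conv[OF fCrG kCr] by simp
    also have "\<dots> = \<phi> f (grng H y) * \<phi> k y" by (rule h.conv_left_unit[OF phifvan])
    also have "grng H y = y" using yu by (rule h.unit_r)
    also have "\<phi> f y = 1" using sigma_eval[rule_format, OF fU aF] f(2) unfolding y_def by simp
    also have "\<phi> k y = cnj (\<phi> m (\<Phi> \<alpha>)) * \<phi> n (\<Phi> \<alpha>)"
    proof -
      have pU: "\<psi> U \<in> open_bisections H" by (rule psiOB[OF U])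
      have pn: "\<And>x. x \<notin> \<psi> U \<Longrightarrow> \<phi> n x = 0" using h.C0_vanish[OF phiC0[OF U n]] by blast
      have ipU: "inj_on (gsrc H) (\<psi> U)" using pU by (simp add: open_bisections_def)
      have dy: "gsrc H (\<Phi> \<alpha>) = y" using PhiU(2)[OF aF U aU] unfolding y_def .
      show ?thesis unfolding phik
        by (rule h.conv_invol_unit[where B="\<psi> U" and b="\<phi> n", OF pn ipU PhiU(1)[OF aF U aU] dy])
    qed
    finally show ?thesis using e1 e2 unfolding y_def by simp
  qed
  have exn: "\<exists>U n. U \<in> open_bisections G \<and> \<alpha> \<in> U \<and> n \<in> C0_on G U \<and> n \<alpha> = 1 \<and>
               continuous_on UNIV n \<and> (\<forall>x. cmod (n x) \<le> 1)" for \<alpha>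
  proof -
    obtain U where U: "U \<in> open_bisections G" "\<alpha> \<in> U" using g.bis_nbhd by blast
    have oU: "open U" using U by (simp add: open_bisections_def)
    obtain f where f: "f \<in> Cc_on U" "f \<alpha> = 1" "\<forall>x. cmod (f x) \<le> 1" using bumpG[OF oU U(2)] by blast
    have "f \<in> C0_on G U" by (rule g.Cc_C0[OF f(1)])
    moreover have "continuous_on UNIV f" using f(1) by (simp add: Cc_on_def)
    ultimately show ?thesis using U f by blast
  qed
  have cnjsq: "cnj z * z = complex_of_real ((cmod z)\<^sup>2)" for z
    using complex_norm_square[of z] by (simp add: mult.commute)
  define c where "c \<alpha> = (SOME z. cmod z = 1 \<and> (\<forall>U n. U \<in> open_bisections G \<and> \<alpha> \<in> U \<and>
                     n \<in> C0_on G U \<and> n \<alpha> \<noteq> 0 \<longrightarrow> z = \<phi> n (\<Phi> \<alpha>) / n \<alpha>))" for \<alpha>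
  have cprop: "cmod (c \<alpha>) = 1 \<and> (\<forall>U n. U \<in> open_bisections G \<and> \<alpha> \<in> U \<and>
                     n \<in> C0_on G U \<and> n \<alpha> \<noteq> 0 \<longrightarrow> c \<alpha> = \<phi> n (\<Phi> \<alpha>) / n \<alpha>)"
    if aF: "gsrc G \<alpha> \<in> F" for \<alpha>
  proof -
    obtain U0 n0 where U0: "U0 \<in> open_bisections G" "\<alpha> \<in> U0" "n0 \<in> C0_on G U0" "n0 \<alpha> = 1"
      using exn by blast
    define z where "z = \<phi> n0 (\<Phi> \<alpha>)"
    have "cnj z * z = 1" using K[OF aF U0(1) U0(1) U0(2) U0(2) U0(3) U0(3)] U0(4) by (simp add: z_def)
    hence zz: "(cmod z)\<^sup>2 = 1" using cnjsq[of z] by (metis of_real_eq_1_iff)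
    hence "cmod z = 1 \<or> cmod z = - 1" by (simp add: power2_eq_1_iff)
    hence z1: "cmod z = 1" using norm_ge_zero[of z] by linarith
    have zc: "z * cnj z = 1" using zz complex_norm_square[of z] by simp
    have all: "z = \<phi> n (\<Phi> \<alpha>) / n \<alpha>"
      if "U \<in> open_bisections G \<and> \<alpha> \<in> U \<and> n \<in> C0_on G U \<and> n \<alpha> \<noteq> 0" for U n
    proof -
      have "cnj z * \<phi> n (\<Phi> \<alpha>) = n \<alpha>"
        using K[OF aF _ U0(1) _ U0(2) _ U0(3), of U n] that U0(4) by (simp add: z_def)
      hence "z * cnj z * \<phi> n (\<Phi> \<alpha>) = z * n \<alpha>" by (simp add: mult.assoc)
      hence "\<phi> n (\<Phi> \<alpha>) = z * n \<alpha>" using zc by simp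
      thus ?thesis using that by simp
    qed
    have ex: "\<exists>z. cmod z = 1 \<and> (\<forall>U n. U \<in> open_bisections G \<and> \<alpha> \<in> U \<and>
                     n \<in> C0_on G U \<and> n \<alpha> \<noteq> 0 \<longrightarrow> z = \<phi> n (\<Phi> \<alpha>) / n \<alpha>)"
      using z1 all by blast
    show ?thesis unfolding c_def by (rule someI_ex[OF ex])
  qed
  have rPhi: "grng H (\<Phi> \<beta>) = \<sigma> (grng G \<beta>)" if bF: "gsrc G \<beta> \<in> F" for \<beta>
  proof -
    obtain W m0 where W: "W \<in> open_bisections G" "\<beta> \<in> W" "m0 \<in> C0_on G W" "m0 \<beta> = 1"
      using exn by blast
    define z where "z = \<phi> m0 (\<Phi> \<beta>)"
    have zz: "cnj z * z = 1" using K[OF bF W(1) W(1) W(2) W(2) W(3) W(3)] W(4) by (simp add: z_def)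
    have claim: "\<phi> f (grng H (\<Phi> \<beta>)) = 1"
      if A: "open A" "A \<subseteq> units G" and f: "f \<in> Cc_on A" "f (grng G \<beta>) = 1" "\<forall>x. cmod (f x) \<le> 1"
      for f A
    proof -
      have fvan: "f x = 0" if "x \<notin> units G" for x using Cc_vanish[OF f(1)] that A(2) by blast
      have fU: "f \<in> C0_on G (units G)" by (rule g.Cc_C0[OF Cc_mono[OF f(1) A(2)]])
      have fcont: "continuous_on UNIV f" using f(1) by (simp add: Cc_on_def)
      have qc: "continuous_on UNIV (\<lambda>\<gamma>. f (grng G \<gamma>))"
        by (rule continuous_on_compose2[OF fcont g.cont_r]) simp
      have fmC: "(\<lambda>\<gamma>. f (grng G \<gamma>) * m0 \<gamma>) \<in> C0_on G W"
        by (rule g.C0_mult[OF bislike_ob[OF W(1)] W(3) qc, where B=1]) (use f(3) in auto)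
      have ceq: "conv G f m0 = (\<lambda>\<gamma>. f (grng G \<gamma>) * m0 \<gamma>)"
        by (rule ext) (rule g.conv_left_unit[OF fvan])
      have phifvan: "\<And>x. x \<notin> units H \<Longrightarrow> \<phi> f x = 0"
        using h.C0_vanish[OF fCr[OF fU]] V_sub by blast
      have "\<phi> (\<lambda>\<gamma>. f (grng G \<gamma>) * m0 \<gamma>) = conv H (\<phi> f) (\<phi> m0)"
        using hom_conv[OF CrG[OF fU] CrG[OF W(3)]] ceq by simp
      hence pfm: "\<phi> (\<lambda>\<gamma>. f (grng G \<gamma>) * m0 \<gamma>) (\<Phi> \<beta>) = \<phi> f (grng H (\<Phi> \<beta>)) * z"
        using h.conv_left_unit[OF phifvan] by (simp add: z_def)
      have "cnj z * \<phi> (\<lambda>\<gamma>. f (grng G \<gamma>) * m0 \<gamma>) (\<Phi> \<beta>) = cnj (m0 \<beta>) * (f (grng G \<beta>) * m0 \<beta>)"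
        using K[OF bF W(1) W(1) W(2) W(2) fmC W(3)] by (simp add: z_def)
      hence "\<phi> f (grng H (\<Phi> \<beta>)) * (cnj z * z) = 1" using pfm W(4) f(2) by (simp add: algebra_simps)
      thus ?thesis using zz by simp
    qed
    obtain Ob where Ob: "Ob \<in> open_bisections G" "ginv G \<beta> \<in> Ob" using g.bis_nbhd by blast
    define A1 where "A1 = gsrc G ` Ob"
    have oA1: "open A1" unfolding A1_def by (rule g.open_d_image) (use Ob in \<open>simp add: open_bisections_def\<close>)
    have rA1: "grng G \<beta> \<in> A1" unfolding A1_def using Ob(2) g.d_i[of \<beta>] by (metis image_eqI)
    have A1u: "A1 \<subseteq> units G" by (auto simp: A1_def)
    obtain f1 where f1: "f1 \<in> Cc_on A1" "f1 (grng G \<beta>) = 1" "\<forall>x. cmod (f1 x) \<le> 1"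
      using bumpG[OF oA1 rA1] by blast
    have c1: "\<phi> f1 (grng H (\<Phi> \<beta>)) = 1" by (rule claim[OF oA1 A1u f1])
    have f1U: "f1 \<in> C0_on G (units G)" by (rule g.Cc_C0[OF Cc_mono[OF f1(1) A1u]])
    have "grng H (\<Phi> \<beta>) \<in> V"
    proof (rule ccontr)
      assume "grng H (\<Phi> \<beta>) \<notin> V"
      hence "\<phi> f1 (grng H (\<Phi> \<beta>)) = 0" by (rule h.C0_vanish[OF fCr[OF f1U]])
      thus False using c1 by simp
    qed
    moreover have "V = \<sigma> ` F" using sh unfolding homeomorphism_def by blast
    ultimately have "grng H (\<Phi> \<beta>) \<in> \<sigma> ` F" by simp
    then obtain x where x': "grng H (\<Phi> \<beta>) = \<sigma> x" "x \<in> F" by (rule imageE)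
    have x: "x \<in> F" "\<sigma> x = grng H (\<Phi> \<beta>)" using x' by simp_all
    have "x = grng G \<beta>"
    proof (rule ccontr)
      assume ne: "x \<noteq> grng G \<beta>"
      define A2 where "A2 = A1 - {x}"
      have oA2: "open A2" unfolding A2_def using oA1 by (intro open_Diff) auto
      have rA2: "grng G \<beta> \<in> A2" using rA1 ne by (auto simp: A2_def)
      have A2u: "A2 \<subseteq> units G" using A1u by (auto simp: A2_def)
      obtain f2 where f2: "f2 \<in> Cc_on A2" "f2 (grng G \<beta>) = 1" "\<forall>x. cmod (f2 x) \<le> 1"
        using bumpG[OF oA2 rA2] by blast
      have c2: "\<phi> f2 (grng H (\<Phi> \<beta>)) = 1" by (rule claim[OF oA2 A2u f2])
      have f2U: "f2 \<in> C0_on G (units G)" by (rule g.Cc_C0[OF Cc_mono[OF f2(1) A2u]])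
      have "\<phi> f2 (\<sigma> x) = f2 x" using sigma_eval[rule_format, OF f2U x(1)] .
      also have "f2 x = 0" by (rule Cc_vanish[OF f2(1)]) (simp add: A2_def)
      finally show False using c2 x(2) by simp
    qed
    thus ?thesis using x(2) by simp
  qed
  have Phimult: "\<Phi> (gmul G \<alpha> \<beta>) = gmul H (\<Phi> \<alpha>) (\<Phi> \<beta>)"
    if aF: "gsrc G \<alpha> \<in> F" and bF: "gsrc G \<beta> \<in> F" and comp: "gsrc G \<alpha> = grng G \<beta>"
      and U: "U \<in> open_bisections G" "\<alpha> \<in> U" and W: "W \<in> open_bisections G" "\<beta> \<in> W"
    for \<alpha> \<beta> U W
  proof -
    define P where "P = bis_prod G U W"
    have POB: "P \<in> open_bisections G" unfolding P_def by (rule g.bis_prod_bis[OF U(1) W(1)])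
    have abP: "gmul G \<alpha> \<beta> \<in> P" unfolding P_def bis_prod_def using U W comp by blast
    have abF: "gsrc G (gmul G \<alpha> \<beta>) \<in> F" using comp bF by simp
    have "\<Phi> (gmul G \<alpha> \<beta>) \<in> \<psi> P" by (rule PhiU(1)[OF abF POB abP])
    also have "\<psi> P = bis_prod H (\<psi> U) (\<psi> W)" unfolding P_def using psi_mult U(1) W(1) by blast
    finally obtain x y where xy: "x \<in> \<psi> U" "y \<in> \<psi> W" "gsrc H x = grng H y" "\<Phi> (gmul G \<alpha> \<beta>) = gmul H x y"
      unfolding bis_prod_def by blast
    have iW: "inj_on (gsrc H) (\<psi> W)" and iU: "inj_on (gsrc H) (\<psi> U)"
      using psiOB[OF W(1)] psiOB[OF U(1)] by (auto simp: open_bisections_def)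
    have "gsrc H y = gsrc H (\<Phi> (gmul G \<alpha> \<beta>))" using xy by simp
    also have "\<dots> = \<sigma> (gsrc G \<beta>)" using PhiU(2)[OF abF POB abP] comp by simp
    also have "\<dots> = gsrc H (\<Phi> \<beta>)" using PhiU(2)[OF bF W] by simp
    finally have "y = \<Phi> \<beta>" using iW xy(2) PhiU(1)[OF bF W] unfolding inj_on_def by blast
    moreover have "x = \<Phi> \<alpha>"
    proof -
      have "gsrc H x = grng H (\<Phi> \<beta>)" using xy(3) \<open>y = \<Phi> \<beta>\<close> by simp
      also have "\<dots> = \<sigma> (gsrc G \<alpha>)" using rPhi[OF bF] comp by simp
      also have "\<dots> = gsrc H (\<Phi> \<alpha>)" using PhiU(2)[OF aF U] by simp
      finally show ?thesis using iU xy(1) PhiU(1)[OF aF U] unfolding inj_on_def by blast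
    qed
    ultimately show ?thesis using xy(4) by simp
  qed
  have cmult: "c (gmul G \<alpha> \<beta>) = c \<alpha> * c \<beta>"
    if aF: "gsrc G \<alpha> \<in> F" and bF: "gsrc G \<beta> \<in> F" and comp: "gsrc G \<alpha> = grng G \<beta>" for \<alpha> \<beta>
  proof -
    obtain U n where U: "U \<in> open_bisections G" "\<alpha> \<in> U" "n \<in> C0_on G U" "n \<alpha> = 1" using exn by blast
    obtain W m where W: "W \<in> open_bisections G" "\<beta> \<in> W" "m \<in> C0_on G W" "m \<beta> = 1" using exn by blast
    define P where "P = bis_prod G U W"
    have POB: "P \<in> open_bisections G" unfolding P_def by (rule g.bis_prod_bis[OF U(1) W(1)])
    have abP: "gmul G \<alpha> \<beta> \<in> P" unfolding P_def bis_prod_def using U W comp by blast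
    have abF: "gsrc G (gmul G \<alpha> \<beta>) \<in> F" using comp bF by simp
    define k where "k = conv G n m"
    have kC: "k \<in> C0_on G P" unfolding k_def P_def by (rule g.conv_C0[OF U(1) W(1) U(3) W(3)])
    have mvan: "\<And>x. x \<notin> W \<Longrightarrow> m x = 0" using g.C0_vanish[OF W(3)] by blast
    have iWd: "inj_on (gsrc G) W" using W(1) by (simp add: open_bisections_def)
    have ab1: "gmul G (gmul G \<alpha> \<beta>) (ginv G \<beta>) = \<alpha>"
    proof -
      have "gmul G (gmul G \<alpha> \<beta>) (ginv G \<beta>) = gmul G \<alpha> (gmul G \<beta> (ginv G \<beta>))"
        using comp by (intro g.assoc) auto
      also have "\<dots> = \<alpha>" using comp by (simp flip: comp)
      finally show ?thesis .
    qed
    have dab: "gsrc G \<beta> = gsrc G (gmul G \<alpha> \<beta>)" using comp by simp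
    have kab: "k (gmul G \<alpha> \<beta>) = 1"
      unfolding k_def using g.conv_bis[where B=W and b=m, OF mvan iWd W(2) dab] ab1 U(4) W(4) by simp
    have "c (gmul G \<alpha> \<beta>) = \<phi> k (\<Phi> (gmul G \<alpha> \<beta>)) / k (gmul G \<alpha> \<beta>)"
      using conjunct2[OF cprop[OF abF], rule_format, of P k] POB abP kC kab by simp
    also have "\<dots> = \<phi> k (\<Phi> (gmul G \<alpha> \<beta>))" using kab by simp
    also have "\<Phi> (gmul G \<alpha> \<beta>) = gmul H (\<Phi> \<alpha>) (\<Phi> \<beta>)" by (rule Phimult[OF aF bF comp U(1,2) W(1,2)])
    also have "\<phi> k = conv H (\<phi> n) (\<phi> m)" unfolding k_def by (rule hom_conv[OF CrG[OF U(3)] CrG[OF W(3)]])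
    also have "conv H (\<phi> n) (\<phi> m) (gmul H (\<Phi> \<alpha>) (\<Phi> \<beta>)) =
        \<phi> n (gmul H (gmul H (\<Phi> \<alpha>) (\<Phi> \<beta>)) (ginv H (\<Phi> \<beta>))) * \<phi> m (\<Phi> \<beta>)"
    proof -
      have pvan: "\<And>x. x \<notin> \<psi> W \<Longrightarrow> \<phi> m x = 0" using h.C0_vanish[OF phiC0[OF W(1,3)]] by blast
      have ipW: "inj_on (gsrc H) (\<psi> W)" using psiOB[OF W(1)] by (simp add: open_bisections_def)
      have compH: "gsrc H (\<Phi> \<alpha>) = grng H (\<Phi> \<beta>)" using PhiU(2)[OF aF U(1,2)] rPhi[OF bF] comp by simp
      have dd: "gsrc H (\<Phi> \<beta>) = gsrc H (gmul H (\<Phi> \<alpha>) (\<Phi> \<beta>))" using compH by simp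
      show ?thesis by (rule h.conv_bis[where B="\<psi> W" and b="\<phi> m", OF pvan ipW PhiU(1)[OF bF W(1,2)] dd])
    qed
    also have "gmul H (gmul H (\<Phi> \<alpha>) (\<Phi> \<beta>)) (ginv H (\<Phi> \<beta>)) = \<Phi> \<alpha>"
    proof -
      have compH: "gsrc H (\<Phi> \<alpha>) = grng H (\<Phi> \<beta>)" using PhiU(2)[OF aF U(1,2)] rPhi[OF bF] comp by simp
      have "gmul H (gmul H (\<Phi> \<alpha>) (\<Phi> \<beta>)) (ginv H (\<Phi> \<beta>)) = gmul H (\<Phi> \<alpha>) (gmul H (\<Phi> \<beta>) (ginv H (\<Phi> \<beta>)))"
        using compH by (intro h.assoc) auto
      also have "\<dots> = \<Phi> \<alpha>" using compH by (simp flip: compH)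
      finally show ?thesis .
    qed
    also have "\<phi> n (\<Phi> \<alpha>) = c \<alpha>" using conjunct2[OF cprop[OF aF], rule_format, of U n] U by simp
    also have "\<phi> m (\<Phi> \<beta>) = c \<beta>" using conjunct2[OF cprop[OF bF], rule_format, of W m] W by simp
    finally show ?thesis .
  qed
  let ?S = "{\<alpha>. gsrc G \<alpha> \<in> F}"
  have loc: "\<exists>N. open N \<and> \<alpha>0 \<in> N \<and> continuous_on (?S \<inter> N) c" if a0: "\<alpha>0 \<in> ?S" for \<alpha>0
  proof -
    obtain U n0 where U: "U \<in> open_bisections G" "\<alpha>0 \<in> U" "n0 \<in> C0_on G U" "n0 \<alpha>0 = 1"
      "continuous_on UNIV n0" using exn by blast
    have pU: "\<psi> U \<in> open_bisections H" by (rule psiOB[OF U(1)])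
    have opU: "open (\<psi> U)" "inj_on (gsrc H) (\<psi> U)" using pU by (auto simp: open_bisections_def)
    obtain sH where sH: "homeomorphism (\<psi> U) (gsrc H ` \<psi> U) (gsrc H) sH"
      using h.bis_homeo[OF opU] by blast
    note sp = h.homeo_props[OF sH]
    define N where "N = U \<inter> {x. n0 x \<noteq> 0}"
    have oU: "open U" using U(1) by (simp add: open_bisections_def)
    have oN: "open N" unfolding N_def
      using open_Collect_neq[OF U(5) continuous_on_const[of UNIV 0]] oU by blast
    have a0N: "\<alpha>0 \<in> N" using U by (simp add: N_def)
    have PhiEq: "\<Phi> \<gamma> = sH (\<sigma> (gsrc G \<gamma>))" and PhiIn: "\<sigma> (gsrc G \<gamma>) \<in> gsrc H ` \<psi> U"
      if "\<gamma> \<in> ?S \<inter> N" for \<gamma>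
    proof -
      have gF: "gsrc G \<gamma> \<in> F" and gU: "\<gamma> \<in> U" using that by (auto simp: N_def)
      have "\<Phi> \<gamma> \<in> \<psi> U" "gsrc H (\<Phi> \<gamma>) = \<sigma> (gsrc G \<gamma>)" using PhiU[OF gF U(1) gU] by auto
      thus "\<Phi> \<gamma> = sH (\<sigma> (gsrc G \<gamma>))" "\<sigma> (gsrc G \<gamma>) \<in> gsrc H ` \<psi> U"
        using sp(1)[of "\<Phi> \<gamma>"] by (auto simp: image_iff) (metis)
    qed
    have ceq: "c \<gamma> = \<phi> n0 (sH (\<sigma> (gsrc G \<gamma>))) / n0 \<gamma>" if "\<gamma> \<in> ?S \<inter> N" for \<gamma>
    proof -
      have gF: "gsrc G \<gamma> \<in> F" and gU: "\<gamma> \<in> U" and gn: "n0 \<gamma> \<noteq> 0" using that by (auto simp: N_def)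
      have "c \<gamma> = \<phi> n0 (\<Phi> \<gamma>) / n0 \<gamma>"
        using conjunct2[OF cprop[OF gF], rule_format, of U n0] U(1,3) gU gn by simp
      thus ?thesis using PhiEq[OF that] by simp
    qed
    have sc: "continuous_on F \<sigma>" using sh by (simp add: homeomorphism_def)
    have cont1: "continuous_on (?S \<inter> N) (\<lambda>\<gamma>. \<sigma> (gsrc G \<gamma>))"
      by (rule continuous_on_compose2[OF sc continuous_on_subset[OF g.cont_d]]) auto
    have cont2: "continuous_on (?S \<inter> N) (\<lambda>\<gamma>. sH (\<sigma> (gsrc G \<gamma>)))"
      by (rule continuous_on_compose2[OF sp(4) cont1]) (use PhiIn in blast)
    have pc: "continuous_on UNIV (\<phi> n0)"
      by (rule h.C0_cont_bounded(1)[OF bislike_ob[OF pU] phiC0[OF U(1) U(3)]])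
    have cont3: "continuous_on (?S \<inter> N) (\<lambda>\<gamma>. \<phi> n0 (sH (\<sigma> (gsrc G \<gamma>))))"
      by (rule continuous_on_compose2[OF pc cont2]) simp
    have cont4: "continuous_on (?S \<inter> N) (\<lambda>\<gamma>. \<phi> n0 (sH (\<sigma> (gsrc G \<gamma>))) / n0 \<gamma>)"
      by (rule continuous_on_divide[OF cont3 continuous_on_subset[OF U(5)]]) (auto simp: N_def)
    have "continuous_on (?S \<inter> N) c"
      by (rule continuous_on_cong[THEN iffD1, OF refl _ cont4]) (simp add: ceq)
    thus ?thesis using oN a0N by blast
  qed
  have ccont: "continuous_on ?S c" unfolding continuous_on_eq_continuous_within
  proof
    fix x assume xS: "x \<in> ?S"
    obtain N where N: "open N" "x \<in> N" "continuous_on (?S \<inter> N) c" using loc[OF xS] by blast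
    have "continuous (at x within (?S \<inter> N)) c"
      using N(3) xS N(2) unfolding continuous_on_eq_continuous_within by blast
    moreover have "at x within (?S \<inter> N) = at x within ?S" by (rule at_within_nhd[OF N(2) N(1)]) auto
    ultimately show "continuous (at x within ?S) c" by simp
  qed
  have P1: "\<forall>\<alpha>\<in>?S. cmod (c \<alpha>) = 1 \<and>
              (\<forall>U n. U \<in> open_bisections G \<and> \<alpha> \<in> U \<and> n \<in> C0_on G U \<and> n \<alpha> \<noteq> 0 \<longrightarrow>
                     c \<alpha> = \<phi> n (\<Phi> \<alpha>) / n \<alpha>)"
    using cprop by simp
  have P3: "\<forall>\<alpha> \<beta>. gsrc G \<alpha> \<in> F \<and> gsrc G \<beta> \<in> F \<and> gsrc G \<alpha> = grng G \<beta> \<longrightarrow>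
              c (gmul G \<alpha> \<beta>) = c \<alpha> * c \<beta>"
    using cmult by blast
  show ?thesis by (intro exI[of _ c] conjI P1 ccont P3)
qed

end
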